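(* Let $H\in\mathbb{C}^{n\times n}$ be Hermitian with eigenvalues $\lambda_1(H)\ge\lambda_2(H)\ge\cdots\ge\lambda_n(H)$ (counted with multiplicity), let $1\le k<n$, and suppose $\lambda_k(H)-\lambda_{k+1}(H)>0$. Let $P_*\in\mathbb{C}^{n\times k}$ with $P_*^{\mathrm{H}}P_*=I_k$ be such that its column space ${\cal R}(P_* )$ is the invariant subspace of $H$ associated with its $k$ largest eigenvalues $\lambda_1(H),\dots,\lambda_k(H)$. Given any $P\in\mathbb{C}^{n\times k}$ with $P^{\mathrm{H}}P=I_k$, let $$\eta=\operatorname{tr}(P_*^{\mathrm{H}}HP_* )-\operatorname{tr}(P^{\mathrm{H}}HP),\qquad \epsilon=\sqrt{\frac{\eta}{\lambda_k(H)-\lambda_{k+1}(H)}}.$$ Then $$\frac{\|HP-P(P^{\mathrm{H}}HP)\|_{\mathrm{F}}}{\lambda_1(H)-\lambda_n(H)}\le\|\sin\Theta({\cal R}(P),{\cal R}(P_* ))\|_{\mathrm{F}}\le\epsilon.$$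
   Context: For a matrix $X$, $X^{\mathrm{H}}$ is its conjugate transpose, ${\cal R}(X)$ its column space, $\|X\|_{\mathrm{F}}=\sqrt{\operatorname{tr}(X^{\mathrm{H}}X)}$ the Frobenius norm. For two $k$-dimensional subspaces ${\cal X}={\cal R}(X)$, ${\cal Y}={\cal R}(Y)$ of $\mathbb{C}^n$ with $X,Y\in\mathbb{C}^{n\times k}$ having orthonormal columns, the canonical angles are $\theta_i=\arccos\sigma_i(X^{\mathrm{H}}Y)\in[0,\pi/2]$, $i=1,\dots,k$, where $\sigma_1(X^{\mathrm{H}}Y)\ge\cdots\ge\sigma_k(X^{\mathrm{H}}Y)$ are the singular values; $\Theta({\cal X},{\cal Y})=\operatorname{diag}(\theta_1,\dots,\theta_k)$ and $\|\sin\Theta({\cal X},{\cal Y})\|_{\mathrm{F}}=\big(\sum_{i=1}^k\sin^2\theta_i\big)^{1/2}$. *)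

theory Defs
  imports "Jordan_Normal_Form.Schur_Decomposition" "Jordan_Normal_Form.Char_Poly"
    "HOL-Computational_Algebra.Polynomial"
begin

text \<open>Conjugate transpose X^H is the library's mat_adjoint.\<close>

definition mat_trace :: "complex mat \<Rightarrow> complex" where
  "mat_trace A = (\<Sum>i<dim_row A. A $$ (i, i))"

definition frob_norm :: "complex mat \<Rightarrow> real" where
  "frob_norm X = sqrt (\<Sum>i<dim_row X. \<Sum>j<dim_col X. (cmod (X $$ (i, j)))\<^sup>2)"

text \<open>Eigenvalues (roots of the characteristic polynomial, with multiplicity)
  of a Hermitian matrix, as reals, in non-increasing order:
  eig_desc H ! (i-1) is lambda_i(H).\<close>
definition eig_desc :: "complex mat \<Rightarrow> real list" where
  "eig_desc H = rev (sorted_list_of_multiset (image_mset Re (proots (char_poly H))))"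

definition sing_vals :: "complex mat \<Rightarrow> real list" where
  "sing_vals M = map sqrt (eig_desc (mat_adjoint M * M))"

text \<open>|| sin Theta(R(X), R(Y)) ||_F for X, Y with orthonormal columns:
  canonical angles theta_i = arccos sigma_i(X^H Y).\<close>
definition sin_theta_F :: "complex mat \<Rightarrow> complex mat \<Rightarrow> real" where
  "sin_theta_F X Y = sqrt (\<Sum>\<sigma>\<leftarrow>sing_vals (mat_adjoint X * Y). (sin (arccos \<sigma>))\<^sup>2)"

end

theory Submission
  imports Defs "HOL-Analysis.L2_Norm"
begin


abbreviation adj :: "complex mat \<Rightarrow> complex mat" where "adj \<equiv> mat_adjoint"

lemma adj_dim[simp]: "dim_row (adj A) = dim_col A" "dim_col (adj A) = dim_row A"
  unfolding mat_adjoint_def by auto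

lemma adj_carrier[simp]: "A \<in> carrier_mat nr nc \<Longrightarrow> adj A \<in> carrier_mat nc nr"
  by (metis carrier_matD carrier_matI adj_dim)

lemma adj_index[simp]: "i < dim_col A \<Longrightarrow> j < dim_row A \<Longrightarrow> adj A $$ (i,j) = cnj (A $$ (j,i))"
  unfolding mat_adjoint_def by (simp add: mat_of_rows_index)

lemma adj_adj[simp]: "adj (adj A) = A"
  by (rule eq_matI, auto)

lemma adj_mult: assumes "A \<in> carrier_mat m n" "B \<in> carrier_mat n p"
  shows "adj (A * B) = adj B * adj A"
  using assms by (intro eq_matI) (auto simp: scalar_prod_def mult.commute intro!: sum.cong)

lemma adj_one[simp]: "adj (1\<^sub>m n) = 1\<^sub>m n"
  by (rule eq_matI, auto)

lemma adj_add: assumes "A \<in> carrier_mat m n" "B \<in> carrier_mat m n"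
  shows "adj (A + B) = adj A + adj B"
  using assms by (intro eq_matI) auto

lemma adj_minus: assumes "A \<in> carrier_mat m n" "B \<in> carrier_mat m n"
  shows "adj (A - B) = adj A - adj B"
  using assms by (intro eq_matI) auto

definition dmat :: "nat \<Rightarrow> (nat \<Rightarrow> complex) \<Rightarrow> complex mat" where
  "dmat n f = mat n n (\<lambda>(i,j). if i = j then f i else 0)"

lemma dmat_carrier[simp]: "dmat n f \<in> carrier_mat n n" and dmat_dim[simp]: "dim_row (dmat n f) = n" "dim_col (dmat n f) = n"
  unfolding dmat_def by auto

lemma dmat_index[simp]: "i < n \<Longrightarrow> j < n \<Longrightarrow> dmat n f $$ (i,j) = (if i = j then f i else 0)"
  unfolding dmat_def by auto

lemma dmat_mult_left: assumes Z: "Z \<in> carrier_mat n m"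
  shows "dmat n f * Z = mat n m (\<lambda>(i,j). f i * Z $$ (i,j))"
proof (rule eq_matI)
  fix i j assume "i < dim_row (mat n m (\<lambda>(i,j). f i * Z $$ (i,j)))" "j < dim_col (mat n m (\<lambda>(i,j). f i * Z $$ (i,j)))"
  hence ij: "i < n" "j < m" by auto
  have "(dmat n f * Z) $$ (i,j) = (\<Sum>l\<in>{0..<n}. (if i = l then f i else 0) * Z $$ (l,j))"
    using Z ij by (simp add: scalar_prod_def)
  also have "\<dots> = (\<Sum>l\<in>{0..<n}. if i = l then f i * Z $$ (l,j) else 0)"
    by (rule sum.cong) auto
  also have "\<dots> = f i * Z $$ (i,j)" using ij by simp
  finally show "(dmat n f * Z) $$ (i,j) = mat n m (\<lambda>(i,j). f i * Z $$ (i,j)) $$ (i,j)" using ij by simp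
qed (use Z in auto)

lemma dmat_mult_right: assumes Z: "Z \<in> carrier_mat m n"
  shows "Z * dmat n f = mat m n (\<lambda>(i,j). Z $$ (i,j) * f j)"
proof (rule eq_matI)
  fix i j assume "i < dim_row (mat m n (\<lambda>(i,j). Z $$ (i,j) * f j))" "j < dim_col (mat m n (\<lambda>(i,j). Z $$ (i,j) * f j))"
  hence ij: "i < m" "j < n" by auto
  have "(Z * dmat n f) $$ (i,j) = (\<Sum>l\<in>{0..<n}. Z $$ (i,l) * (if l = j then f l else 0))"
    using Z ij by (simp add: scalar_prod_def)
  also have "\<dots> = (\<Sum>l\<in>{0..<n}. if j = l then Z $$ (i,l) * f l else 0)"
    by (rule sum.cong) auto
  also have "\<dots> = Z $$ (i,j) * f j" using ij by simp
  finally show "(Z * dmat n f) $$ (i,j) = mat m n (\<lambda>(i,j). Z $$ (i,j) * f j) $$ (i,j)" using ij by simp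
qed (use Z in auto)

definition fsq :: "complex mat \<Rightarrow> real" where
  "fsq X = (\<Sum>i<dim_row X. \<Sum>j<dim_col X. (cmod (X $$ (i,j)))\<^sup>2)"
definition rowsq :: "complex mat \<Rightarrow> nat \<Rightarrow> real" where
  "rowsq X i = (\<Sum>j<dim_col X. (cmod (X $$ (i,j)))\<^sup>2)"
definition colsq :: "complex mat \<Rightarrow> nat \<Rightarrow> real" where
  "colsq X j = (\<Sum>i<dim_row X. (cmod (X $$ (i,j)))\<^sup>2)"

lemma fsq_rows: "fsq X = (\<Sum>i<dim_row X. rowsq X i)"
  unfolding fsq_def rowsq_def ..
lemma fsq_cols: "fsq X = (\<Sum>j<dim_col X. colsq X j)"
  unfolding fsq_def colsq_def by (rule sum.swap)
lemma rowsq_nonneg: "0 \<le> rowsq X i" unfolding rowsq_def by (auto intro: sum_nonneg)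
lemma colsq_nonneg: "0 \<le> colsq X i" unfolding colsq_def by (auto intro: sum_nonneg)
lemma fsq_nonneg: "0 \<le> fsq X" unfolding fsq_def by (auto intro!: sum_nonneg)

lemma fsq_adj: "fsq (adj X) = fsq X"
  unfolding fsq_def by (simp, subst sum.swap, auto intro!: sum.cong)

lemma cnj_mult_self: "cnj z * z = complex_of_real ((cmod z)\<^sup>2)"
  by (metis complex_norm_square mult.commute)

lemma adj_mult_self_diag: assumes "j < dim_col Z"
  shows "(adj Z * Z) $$ (j,j) = complex_of_real (colsq Z j)"
  using assms unfolding colsq_def by (simp add: scalar_prod_def cnj_mult_self lessThan_atLeast0)

lemma fsq_via_gram: "fsq X = (\<Sum>j<dim_col X. Re ((adj X * X) $$ (j,j)))"
  unfolding fsq_cols by (rule sum.cong[OF refl]) (subst adj_mult_self_diag, auto)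

lemma fsq_gram_eq: assumes "adj X * X = adj Y * Y" "dim_col X = dim_col Y"
  shows "fsq X = fsq Y"
  unfolding fsq_via_gram using assms by simp




lemma fsq_unitary_left: assumes Q: "Q \<in> carrier_mat n m" and QQ: "adj Q * Q = 1\<^sub>m m" and X: "X \<in> carrier_mat m p"
  shows "fsq (Q * X) = fsq X"
proof (rule fsq_gram_eq)
  have aQ: "adj Q \<in> carrier_mat m n" and aX: "adj X \<in> carrier_mat p m" and QX: "Q * X \<in> carrier_mat n p"
    using Q X by auto
  have "adj (Q * X) * (Q * X) = adj X * adj Q * (Q * X)" using adj_mult[OF Q X] by simp
  also have "\<dots> = adj X * (adj Q * (Q * X))" by (rule assoc_mult_mat[OF aX aQ QX])
  also have "adj Q * (Q * X) = (adj Q * Q) * X" by (rule assoc_mult_mat[symmetric, OF aQ Q X])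
  also have "\<dots> = X" using X by (simp add: QQ)
  finally show "adj (Q * X) * (Q * X) = adj X * X" .
  show "dim_col (Q * X) = dim_col X" by simp
qed

lemma fsq_dmat_left: assumes Z: "Z \<in> carrier_mat n m"
  shows "fsq (dmat n f * Z) = (\<Sum>i<n. (cmod (f i))\<^sup>2 * rowsq Z i)"
  unfolding dmat_mult_left[OF Z] fsq_def rowsq_def using Z
  by (auto simp: norm_mult power_mult_distrib sum_distrib_left intro!: sum.cong)


lemma gram_proj: assumes P: "P \<in> carrier_mat n k" and PP: "adj P * P = 1\<^sub>m k" and X: "X \<in> carrier_mat n p"
  shows "adj ((1\<^sub>m n - P * adj P) * X) * ((1\<^sub>m n - P * adj P) * X) = adj X * X - adj (adj P * X) * (adj P * X)"
proof -
  let ?G = "1\<^sub>m n - P * adj P"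
  have aP: "adj P \<in> carrier_mat k n" using P by simp
  have PaP: "P * adj P \<in> carrier_mat n n" using P by simp
  have one: "1\<^sub>m n \<in> carrier_mat n n" by simp
  have G: "?G \<in> carrier_mat n n" using PaP by (rule minus_carrier_mat)
  have aX: "adj X \<in> carrier_mat p n" using X by simp
  have aG: "adj ?G = ?G" using adj_minus[OF one PaP] adj_mult[OF P aP] by simp
  have PP2: "P * adj P * (P * adj P) = P * adj P"
  proof -
    have "P * adj P * (P * adj P) = P * (adj P * (P * adj P))" by (rule assoc_mult_mat[OF P aP PaP])
    also have "adj P * (P * adj P) = (adj P * P) * adj P" by (rule assoc_mult_mat[symmetric, OF aP P aP])
    also have "\<dots> = adj P" unfolding PP by (rule left_mult_one_mat[OF aP])
    finally show ?thesis .
  qed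
  have GG: "?G * ?G = ?G"
  proof -
    have "?G * ?G = 1\<^sub>m n * ?G - P * adj P * ?G" by (rule minus_mult_distrib_mat[OF one PaP G])
    also have "P * adj P * ?G = P * adj P * 1\<^sub>m n - P * adj P * (P * adj P)" by (rule mult_minus_distrib_mat[OF PaP one PaP])
    also have "\<dots> = 0\<^sub>m n n" unfolding PP2 right_mult_one_mat[OF PaP] by (rule eq_matI) (use PaP in auto)
    finally have "?G * ?G = 1\<^sub>m n * ?G - 0\<^sub>m n n" .
    also have "\<dots> = ?G" unfolding left_mult_one_mat[OF G] by (rule eq_matI) (use G in auto)
    finally show ?thesis .
  qed
  have e1: "adj (?G * X) * (?G * X) = adj X * (?G * X)"
  proof -
    have "adj (?G * X) * (?G * X) = adj X * ?G * (?G * X)" using adj_mult[OF G X] aG by simp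
    also have "\<dots> = adj X * (?G * (?G * X))" by (rule assoc_mult_mat[OF aX G mult_carrier_mat[OF G X]])
    also have "?G * (?G * X) = ?G * X" using assoc_mult_mat[OF G G X] GG by simp
    finally show ?thesis .
  qed
  have "adj X * (?G * X) = adj X * (1\<^sub>m n * X - P * adj P * X)" using minus_mult_distrib_mat[OF one PaP X] by simp
  also have "\<dots> = adj X * (1\<^sub>m n * X) - adj X * (P * adj P * X)"
    by (rule mult_minus_distrib_mat[OF aX]) (use X PaP in auto)
  also have "adj X * (P * adj P * X) = adj (adj P * X) * (adj P * X)"
  proof -
    have "adj (adj P * X) = adj X * P" using adj_mult[OF aP X] by simp
    moreover have "adj X * P * (adj P * X) = adj X * (P * (adj P * X))" by (rule assoc_mult_mat[OF aX P mult_carrier_mat[OF aP X]])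
    moreover have "P * adj P * X = P * (adj P * X)" by (rule assoc_mult_mat[OF P aP X])
    ultimately show ?thesis by simp
  qed
  finally show ?thesis using X e1 by simp
qed


lemma fsq_proj: assumes P: "P \<in> carrier_mat n k" and PP: "adj P * P = 1\<^sub>m k" and X: "X \<in> carrier_mat n p"
  shows "fsq ((1\<^sub>m n - P * adj P) * X) + fsq (adj P * X) = fsq X"
proof -
  let ?G = "1\<^sub>m n - P * adj P"
  have e: "adj (?G * X) * (?G * X) = adj X * X - adj (adj P * X) * (adj P * X)" by (rule gram_proj[OF assms])
  have "fsq (?G * X) = (\<Sum>j<p. Re ((adj (?G * X) * (?G * X)) $$ (j,j)))" using X P unfolding fsq_via_gram by simp
  also have "\<dots> = (\<Sum>j<p. Re ((adj X * X) $$ (j,j)) - Re ((adj (adj P * X) * (adj P * X)) $$ (j,j)))"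
    unfolding e using X P carrier_matD[OF X] carrier_matD[OF P] by (intro sum.cong refl) (simp del: index_mult_mat(1))
  also have "\<dots> = fsq X - fsq (adj P * X)" using X P unfolding fsq_via_gram by (simp add: sum_subtractf)
  finally show ?thesis by simp
qed


lemma fsq_dmat_right: assumes Z: "Z \<in> carrier_mat m n"
  shows "fsq (Z * dmat n f) = (\<Sum>j<n. (cmod (f j))\<^sup>2 * colsq Z j)"
  unfolding dmat_mult_right[OF Z] fsq_cols colsq_def using Z
  by (auto simp: norm_mult power_mult_distrib sum_distrib_left mult.commute intro!: sum.cong)



lemma fsq_proj_le: assumes P: "P \<in> carrier_mat n k" and PP: "adj P * P = 1\<^sub>m k" and X: "X \<in> carrier_mat n p"
  shows "fsq (adj P * X) \<le> fsq X" "fsq ((1\<^sub>m n - P * adj P) * X) \<le> fsq X"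
  using fsq_proj[OF assms] fsq_nonneg[of "adj P * X"] fsq_nonneg[of "(1\<^sub>m n - P * adj P) * X"] by linarith+


lemma mat_trace_comm: assumes A: "A \<in> carrier_mat m n" and B: "B \<in> carrier_mat n m"
  shows "mat_trace (A * B) = mat_trace (B * A)"
  unfolding mat_trace_def using A B
  by (simp add: scalar_prod_def lessThan_atLeast0[symmetric], subst sum.swap, auto intro!: sum.cong simp: mult.commute)


lemma cnj_mult_self2: "cnj z * (a * z) = a * complex_of_real ((cmod z)\<^sup>2)"
  by (metis cnj_mult_self mult.assoc mult.commute)

lemma trace_quad: assumes Z: "Z \<in> carrier_mat n m"
  shows "mat_trace (adj Z * dmat n f * Z) = (\<Sum>i<n. f i * complex_of_real (rowsq Z i))"
proof -
  have "adj Z * dmat n f * Z = adj Z * (dmat n f * Z)" using Z by (metis adj_carrier assoc_mult_mat dmat_carrier)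
  also have "\<dots> = adj Z * mat n m (\<lambda>(i,j). f i * Z $$ (i,j))" by (simp add: dmat_mult_left[OF Z])
  finally have e: "adj Z * dmat n f * Z = adj Z * mat n m (\<lambda>(i,j). f i * Z $$ (i,j))" .
  have "mat_trace (adj Z * dmat n f * Z) = (\<Sum>j<m. \<Sum>i<n. cnj (Z $$ (i,j)) * (f i * Z $$ (i,j)))"
    unfolding e mat_trace_def using Z by (simp add: scalar_prod_def lessThan_atLeast0)
  also have "\<dots> = (\<Sum>i<n. \<Sum>j<m. f i * complex_of_real ((cmod (Z $$ (i,j)))\<^sup>2))"
    by (subst sum.swap) (intro sum.cong refl, rule cnj_mult_self2)
  also have "\<dots> = (\<Sum>i<n. f i * complex_of_real (rowsq Z i))"
    unfolding rowsq_def using Z by (simp add: sum_distrib_left)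
  finally show ?thesis .
qed


lemma frob_fsq: "frob_norm X = sqrt (fsq X)" unfolding frob_norm_def fsq_def ..


lemma frob_triangle: assumes A: "A \<in> carrier_mat m n" and B: "B \<in> carrier_mat m n"
  shows "frob_norm (A + B) \<le> frob_norm A + frob_norm B"
proof -
  have L: "frob_norm X = L2_set (\<lambda>(i,j). cmod (X $$ (i,j))) ({..<m} \<times> {..<n})" if "X \<in> carrier_mat m n" for X
    using that unfolding frob_norm_def L2_set_def by (simp add: sum.cartesian_product case_prod_beta)
  have "frob_norm (A + B) = L2_set (\<lambda>(i,j). cmod ((A + B) $$ (i,j))) ({..<m} \<times> {..<n})" using A B by (simp add: L)
  also have "\<dots> \<le> L2_set (\<lambda>x. (\<lambda>(i,j). cmod (A $$ (i,j))) x + (\<lambda>(i,j). cmod (B $$ (i,j))) x) ({..<m} \<times> {..<n})"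
    by (rule L2_set_mono) (use A B in \<open>auto simp: norm_triangle_ineq\<close>)
  also have "\<dots> \<le> L2_set (\<lambda>(i,j). cmod (A $$ (i,j))) ({..<m} \<times> {..<n}) + L2_set (\<lambda>(i,j). cmod (B $$ (i,j))) ({..<m} \<times> {..<n})"
    by (rule L2_set_triangle_ineq)
  also have "\<dots> = frob_norm A + frob_norm B" using A B by (simp add: L)
  finally show ?thesis .
qed




lemma unitary_completion: assumes v: "v \<in> carrier_vec n" and v0: "v \<noteq> 0\<^sub>v n"
  shows "\<exists>W \<in> carrier_mat n n. adj W * W = 1\<^sub>m n \<and> W * adj W = 1\<^sub>m n \<and> (\<exists>c. c \<noteq> 0 \<and> col W 0 = c \<cdot>\<^sub>v v)"
proof -
  define b where "b = basis_completion v"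
  define ws where "ws = gram_schmidt n b"
  interpret cof_vec_space n "TYPE(complex)" .
  from basis_completion[OF v v0, folded b_def]
  have span_b: "span (set b) = carrier_vec n" and dist_b: "distinct b"
    and indep: "\<not> lin_dep (set b)" and b: "set b \<subseteq> carrier_vec n" and hdb: "hd b = v"
    and len_b: "length b = n" by auto
  have n: "n > 0" using v v0 by (cases n) auto
  from hdb len_b n obtain vs where bv: "b = v # vs" by (cases b, auto)
  from gram_schmidt_result[OF b dist_b indep refl, folded ws_def]
  have ws: "set ws \<subseteq> carrier_vec n" "corthogonal ws" "length ws = n"
    by (auto simp: len_b)
  from gram_schmidt_hd[OF v, of vs, folded bv] have hdws: "hd ws = v" unfolding ws_def .
  have ws0: "ws ! 0 = v" using hdws ws(3) n by (cases ws) auto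
  have wsc: "ws ! j \<in> carrier_vec n" if "j < n" for j using ws that by auto
  define nr where "nr j = sqrt (Re (ws ! j \<bullet>c ws ! j))" for j
  have sp_real: "ws ! j \<bullet>c ws ! j = complex_of_real ((nr j)\<^sup>2) \<and> nr j > 0" if j: "j < n" for j
  proof -
    have ge: "ws ! j \<bullet>c ws ! j \<ge> 0" by (rule conjugate_square_ge_0_vec)
    have ne: "ws ! j \<bullet>c ws ! j \<noteq> 0" using corthogonalD[OF ws(2), of j j] j ws(3) by auto
    have im: "Im (ws ! j \<bullet>c ws ! j) = 0" and re: "Re (ws ! j \<bullet>c ws ! j) \<ge> 0"
      using ge by (auto simp: less_eq_complex_def)
    have "Re (ws ! j \<bullet>c ws ! j) \<noteq> 0" using ne im by (simp add: complex_eq_iff)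
    hence rp: "Re (ws ! j \<bullet>c ws ! j) > 0" using re by simp
    have "(nr j)\<^sup>2 = Re (ws ! j \<bullet>c ws ! j)" unfolding nr_def using rp by simp
    hence "ws ! j \<bullet>c ws ! j = complex_of_real ((nr j)\<^sup>2)" using im by (simp add: complex_eq_iff)
    moreover have "nr j > 0" unfolding nr_def using rp by simp
    ultimately show ?thesis by simp
  qed
  define W where "W = mat n n (\<lambda>(l,j). ws ! j $ l / complex_of_real (nr j))"
  have W: "W \<in> carrier_mat n n" unfolding W_def by simp
  have WW: "adj W * W = 1\<^sub>m n"
  proof (rule eq_matI)
    fix i j assume "i < dim_row (1\<^sub>m n :: complex mat)" "j < dim_col (1\<^sub>m n :: complex mat)"
    hence i: "i < n" and j: "j < n" by auto
    have "(adj W * W) $$ (i,j) = (\<Sum>l\<in>{0..<n}. cnj (ws ! i $ l / complex_of_real (nr i)) * (ws ! j $ l / complex_of_real (nr j)))"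
      using i j W unfolding W_def by (simp add: scalar_prod_def)
    also have "\<dots> = (\<Sum>l\<in>{0..<n}. ws ! j $ l * cnj (ws ! i $ l)) / (complex_of_real (nr i) * complex_of_real (nr j))"
      by (simp add: sum_divide_distrib ac_simps)
    also have "(\<Sum>l\<in>{0..<n}. ws ! j $ l * cnj (ws ! i $ l)) = ws ! j \<bullet>c ws ! i"
      using wsc[OF i] wsc[OF j] by (simp add: scalar_prod_def)
    finally have e: "(adj W * W) $$ (i,j) = ws ! j \<bullet>c ws ! i / (complex_of_real (nr i) * complex_of_real (nr j))" .
    show "(adj W * W) $$ (i,j) = 1\<^sub>m n $$ (i,j)"
    proof (cases "i = j")
      case True
      with e sp_real[OF i] show ?thesis using i by (simp add: power2_eq_square)
    next
      case False
      hence "ws ! j \<bullet>c ws ! i = 0" using corthogonalD[OF ws(2), of j i] i j ws(3) by auto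
      with e False show ?thesis using i j by simp
    qed
  qed (use W in auto)
  have WW': "W * adj W = 1\<^sub>m n" by (rule mat_mult_left_right_inverse[OF adj_carrier[OF W] W WW])
  have "col W 0 = (1 / complex_of_real (nr 0)) \<cdot>\<^sub>v v"
    using n v unfolding W_def ws0[symmetric] by (intro eq_vecI) (auto simp: ws0)
  moreover have "1 / complex_of_real (nr 0) \<noteq> 0" using sp_real[OF n] by simp
  ultimately show ?thesis using W WW WW' by blast
qed

definition ext1 :: "nat \<Rightarrow> complex mat \<Rightarrow> complex mat" where
  "ext1 m U = mat (Suc m) (Suc m) (\<lambda>(i,j). if i = 0 then (if j = 0 then 1 else 0) else if j = 0 then 0 else U $$ (i-1, j-1))"

lemma ext1_carrier[simp]: "ext1 m U \<in> carrier_mat (Suc m) (Suc m)"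
  unfolding ext1_def by simp

lemma ext1_dim[simp]: "dim_row (ext1 m U) = Suc m" "dim_col (ext1 m U) = Suc m"
  unfolding ext1_def by simp_all

lemma ext1_unitary: assumes U: "U \<in> carrier_mat m m" and UU: "adj U * U = 1\<^sub>m m"
  shows "adj (ext1 m U) * ext1 m U = 1\<^sub>m (Suc m)"
proof (rule eq_matI)
  fix i j assume "i < dim_row (1\<^sub>m (Suc m) :: complex mat)" "j < dim_col (1\<^sub>m (Suc m) :: complex mat)"
  hence i: "i < Suc m" and j: "j < Suc m" by auto
  let ?E = "ext1 m U"
  have "(adj ?E * ?E) $$ (i,j) = (\<Sum>l\<in>{0..<Suc m}. cnj (?E $$ (l,i)) * ?E $$ (l,j))"
    using i j by (simp add: scalar_prod_def del: sum.op_ivl_Suc)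
  also have "\<dots> = cnj (?E $$ (0,i)) * ?E $$ (0,j) + (\<Sum>l\<in>{0..<m}. cnj (?E $$ (Suc l,i)) * ?E $$ (Suc l,j))"
    by (subst sum.atLeast0_lessThan_Suc_shift) (simp add: o_def)
  finally have e: "(adj ?E * ?E) $$ (i,j) = cnj (?E $$ (0,i)) * ?E $$ (0,j) + (\<Sum>l\<in>{0..<m}. cnj (?E $$ (Suc l,i)) * ?E $$ (Suc l,j))" .
  show "(adj ?E * ?E) $$ (i,j) = 1\<^sub>m (Suc m) $$ (i,j)"
  proof (cases i)
    case 0
    then show ?thesis using e i j by (cases j) (auto simp: ext1_def)
  next
    case (Suc i')
    show ?thesis
    proof (cases j)
      case 0
      then show ?thesis using e i j Suc by (auto simp: ext1_def)
    next
      case (Suc j')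
      have "(\<Sum>l\<in>{0..<m}. cnj (?E $$ (Suc l,i)) * ?E $$ (Suc l,j)) = (\<Sum>l\<in>{0..<m}. cnj (U $$ (l,i')) * U $$ (l,j'))"
        using i j \<open>i = Suc i'\<close> Suc by (intro sum.cong) (auto simp: ext1_def)
      also have "\<dots> = (adj U * U) $$ (i', j')" using U i j \<open>i = Suc i'\<close> Suc by (simp add: scalar_prod_def)
      finally show ?thesis using e i j \<open>i = Suc i'\<close> Suc UU by (auto simp: ext1_def)
    qed
  qed
qed auto

lemma ext1_mult: assumes A': "A' \<in> carrier_mat (Suc m) (Suc m)"
  and c0: "\<And>i. i < Suc m \<Longrightarrow> A' $$ (i,0) = (if i = 0 then e else 0)"
  and r0: "\<And>j. j < Suc m \<Longrightarrow> A' $$ (0,j) = (if j = 0 then e else 0)"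
  and A3: "A3 = mat m m (\<lambda>(i,j). A' $$ (Suc i, Suc j))"
  and U: "U \<in> carrier_mat m m" and AU: "A3 * U = U * dmat m f"
  shows "A' * ext1 m U = ext1 m U * dmat (Suc m) (\<lambda>i. if i = 0 then e else f (i - 1))"
proof (rule eq_matI)
  fix i j assume "i < dim_row (ext1 m U * dmat (Suc m) (\<lambda>i. if i = 0 then e else f (i - 1)))"
    "j < dim_col (ext1 m U * dmat (Suc m) (\<lambda>i. if i = 0 then e else f (i - 1)))"
  hence i: "i < Suc m" and j: "j < Suc m" by auto
  let ?E = "ext1 m U"
  have rhs: "(?E * dmat (Suc m) (\<lambda>i. if i = 0 then e else f (i - 1))) $$ (i,j) = ?E $$ (i,j) * (if j = 0 then e else f (j - 1))"
    using dmat_mult_right[OF ext1_carrier[of m U]] i j by simp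
  have "(A' * ?E) $$ (i,j) = (\<Sum>l\<in>{0..<Suc m}. A' $$ (i,l) * ?E $$ (l,j))"
    using i j A' by (simp add: scalar_prod_def del: sum.op_ivl_Suc)
  also have "\<dots> = A' $$ (i,0) * ?E $$ (0,j) + (\<Sum>l\<in>{0..<m}. A' $$ (i,Suc l) * ?E $$ (Suc l,j))"
    by (subst sum.atLeast0_lessThan_Suc_shift) (simp add: o_def)
  finally have e: "(A' * ?E) $$ (i,j) = A' $$ (i,0) * ?E $$ (0,j) + (\<Sum>l\<in>{0..<m}. A' $$ (i,Suc l) * ?E $$ (Suc l,j))" .
  show "(A' * ?E) $$ (i,j) = (?E * dmat (Suc m) (\<lambda>i. if i = 0 then e else f (i - 1))) $$ (i,j)"
    unfolding rhs
  proof (cases i)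
    case 0
    have "(\<Sum>l\<in>{0..<m}. A' $$ (i,Suc l) * ?E $$ (Suc l,j)) = 0"
      using 0 r0 by (intro sum.neutral) auto
    then show "(A' * ?E) $$ (i,j) = ?E $$ (i,j) * (if j = 0 then e else f (j - 1))"
      using e 0 c0 j by (cases j) (auto simp: ext1_def)
  next
    case (Suc i')
    show "(A' * ?E) $$ (i,j) = ?E $$ (i,j) * (if j = 0 then e else f (j - 1))"
    proof (cases j)
      case 0
      have "(\<Sum>l\<in>{0..<m}. A' $$ (i,Suc l) * ?E $$ (Suc l,j)) = 0"
        using 0 by (intro sum.neutral) (auto simp: ext1_def)
      then show ?thesis using e 0 Suc c0 i by (auto simp: ext1_def)
    next
      case (Suc j')
      have "(\<Sum>l\<in>{0..<m}. A' $$ (i,Suc l) * ?E $$ (Suc l,j)) = (\<Sum>l\<in>{0..<m}. A3 $$ (i',l) * U $$ (l,j'))"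
        using i j \<open>i = Suc i'\<close> Suc A3 by (intro sum.cong) (auto simp: ext1_def)
      also have "\<dots> = (A3 * U) $$ (i', j')" using U A3 i j \<open>i = Suc i'\<close> Suc by (simp add: scalar_prod_def)
      also have "\<dots> = U $$ (i',j') * f j'" unfolding AU using dmat_mult_right[OF U] i j \<open>i = Suc i'\<close> Suc by simp
      finally show ?thesis using e i j \<open>i = Suc i'\<close> Suc c0 by (auto simp: ext1_def)
    qed
  qed
qed (use A' in auto)


lemma spectral_hermitian:
  assumes "A \<in> carrier_mat n n" "adj A = A" "char_poly A = (\<Prod>e\<leftarrow>es. [:-e, 1:])"
  shows "\<exists>U \<in> carrier_mat n n. adj U * U = 1\<^sub>m n \<and> U * adj U = 1\<^sub>m n \<and> A * U = U * dmat n (\<lambda>i. es ! i)"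
  using assms
proof (induction es arbitrary: n A)
  case Nil
  have "degree (char_poly A) = n" using degree_monic_char_poly[OF Nil(1)] by simp
  hence n: "n = 0" using Nil(3) by simp
  show ?case
    by (rule bexI[of _ "1\<^sub>m n"]) (use Nil(1) n in \<open>auto intro!: eq_matI\<close>)
next
  case (Cons e es n A)
  have A: "A \<in> carrier_mat n n" and hA: "adj A = A" and cp: "char_poly A = [:-e,1:] * (\<Prod>e\<leftarrow>es. [:-e, 1:])"
    using Cons.prems by auto
  have "eigenvalue A e" unfolding eigenvalue_root_char_poly[OF A] cp by simp
  from find_eigenvector[OF A this] obtain v where ev: "eigenvector A v e" by blast
  have v: "v \<in> carrier_vec n" and v0: "v \<noteq> 0\<^sub>v n" and Av: "A *\<^sub>v v = e \<cdot>\<^sub>v v"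
    using ev A unfolding eigenvector_def by auto
  have "n \<noteq> 0" using v v0 by (auto intro!: eq_vecI)
  then obtain m where nm: "n = Suc m" by (cases n) auto
  from unitary_completion[OF v v0] obtain W c where W: "W \<in> carrier_mat n n" and WW: "adj W * W = 1\<^sub>m n"
    and WW': "W * adj W = 1\<^sub>m n" and c: "c \<noteq> 0" and cW: "col W 0 = c \<cdot>\<^sub>v v" by blast
  have aW: "adj W \<in> carrier_mat n n" using W by simp
  define A' where "A' = adj W * A * W"
  have A': "A' \<in> carrier_mat n n" unfolding A'_def by (rule mult_carrier_mat[OF mult_carrier_mat[OF aW A] W])
  have AW: "A * W \<in> carrier_mat n n" using A W by simp
  have colAW: "col (A * W) 0 = e \<cdot>\<^sub>v col W 0"
  proof -
    have "col (A * W) 0 = A *\<^sub>v col W 0" using col_mult2[OF A W, of 0] nm by simp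
    also have "\<dots> = c \<cdot>\<^sub>v (A *\<^sub>v v)" unfolding cW by (rule mult_mat_vec[OF A v])
    also have "\<dots> = e \<cdot>\<^sub>v (c \<cdot>\<^sub>v v)" unfolding Av by (intro eq_vecI) (use v in auto)
    finally show ?thesis unfolding cW .
  qed
  have colA': "col A' 0 = e \<cdot>\<^sub>v unit_vec n 0"
  proof -
    have "A' = adj W * (A * W)" unfolding A'_def by (rule assoc_mult_mat[OF aW A W])
    hence "col A' 0 = adj W *\<^sub>v col (A * W) 0" using col_mult2[OF aW AW, of 0] nm by simp
    also have "\<dots> = e \<cdot>\<^sub>v (adj W *\<^sub>v col W 0)" unfolding colAW by (rule mult_mat_vec[OF aW]) (use W in auto)
    also have "adj W *\<^sub>v col W 0 = col (adj W * W) 0" using col_mult2[OF aW W, of 0] nm by simp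
    also have "\<dots> = unit_vec n 0" unfolding WW using nm by simp
    finally show ?thesis .
  qed
  have c0: "A' $$ (i,0) = (if i = 0 then e else 0)" if "i < n" for i
  proof -
    have "A' $$ (i,0) = col A' 0 $ i" using that A' nm by simp
    thus ?thesis unfolding colA' using that by simp
  qed
  have hA': "adj A' = A'"
  proof -
    have "adj A' = adj W * adj (adj W * A)" unfolding A'_def by (rule adj_mult[OF mult_carrier_mat[OF aW A] W])
    also have "adj (adj W * A) = adj A * adj (adj W)" by (rule adj_mult[OF aW A])
    also have "\<dots> = A * W" unfolding hA by simp
    finally show ?thesis unfolding A'_def using assoc_mult_mat[OF aW A W] by simp
  qed
  have r0': "A' $$ (0,j) = cnj (A' $$ (j,0))" if "j < n" for j
  proof -
    have "A' $$ (0,j) = adj A' $$ (0,j)" by (simp add: hA')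
    also have "\<dots> = cnj (A' $$ (j,0))" using that A' nm by simp
    finally show ?thesis .
  qed
  have ereal: "cnj e = e" using r0'[of 0] c0[of 0] nm by simp
  have r0: "A' $$ (0,j) = (if j = 0 then e else 0)" if "j < n" for j
    using r0'[OF that] c0[OF that] ereal by simp
  define A3 where "A3 = mat m m (\<lambda>(i,j). A' $$ (Suc i, Suc j))"
  have A3: "A3 \<in> carrier_mat m m" unfolding A3_def by simp
  have A'blk: "A' = four_block_mat (mat 1 1 (\<lambda>_. e)) (0\<^sub>m 1 m) (0\<^sub>m m 1) A3"
  proof (rule eq_matI)
    fix i j assume "i < dim_row (four_block_mat (mat 1 1 (\<lambda>_. e)) (0\<^sub>m 1 m) (0\<^sub>m m 1) A3)"
      "j < dim_col (four_block_mat (mat 1 1 (\<lambda>_. e)) (0\<^sub>m 1 m) (0\<^sub>m m 1) A3)"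
    hence i: "i < Suc m" and j: "j < Suc m" using A3 by auto
    show "A' $$ (i,j) = four_block_mat (mat 1 1 (\<lambda>_. e)) (0\<^sub>m 1 m) (0\<^sub>m m 1) A3 $$ (i,j)"
      using i j A3 c0[of i] r0[of j] nm unfolding A3_def by (cases i; cases j) auto
  qed (use A' A3 nm in auto)
  have sim: "similar_mat A' A"
    unfolding similar_mat_def similar_mat_wit_def Let_def
    by (rule exI[of _ "adj W"], rule exI[of _ W]) (use A' A W aW WW WW' in \<open>auto simp: A'_def\<close>)
  have "char_poly A' = char_poly (mat 1 1 (\<lambda>_. e)) * char_poly A3"
    unfolding A'blk by (rule char_poly_four_block_zeros_col) (use A3 in auto)
  also have "char_poly (mat 1 1 (\<lambda>_. e)) = [:-e, 1:]"
    by (simp add: char_poly_defs det_def sign_def)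
  finally have "[:-e, 1:] * char_poly A3 = [:-e,1:] * (\<Prod>e\<leftarrow>es. [:-e, 1:])"
    using char_poly_similar[OF sim] cp by simp
  hence cp3: "char_poly A3 = (\<Prod>e\<leftarrow>es. [:-e, 1:])"
    by (metis mult_cancel_left pCons_eq_0_iff zero_neq_one)
  have hA3: "adj A3 = A3"
  proof (rule eq_matI)
    fix i j assume "i < dim_row A3" "j < dim_col A3"
    hence i: "i < m" and j: "j < m" using A3 by auto
    have "adj A3 $$ (i,j) = cnj (A' $$ (Suc j, Suc i))" using i j unfolding A3_def by simp
    also have "\<dots> = adj A' $$ (Suc i, Suc j)" using i j A' nm by simp
    also have "\<dots> = A3 $$ (i,j)" unfolding hA' using i j unfolding A3_def by simp
    finally show "adj A3 $$ (i,j) = A3 $$ (i,j)" .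
  qed (use A3 in auto)
  from Cons.IH[OF A3 hA3 cp3] obtain U3 where U3: "U3 \<in> carrier_mat m m" and U3U3: "adj U3 * U3 = 1\<^sub>m m"
    and AU3: "A3 * U3 = U3 * dmat m (\<lambda>i. es ! i)" by blast
  define U' where "U' = ext1 m U3"
  have U': "U' \<in> carrier_mat n n" unfolding U'_def nm by simp
  have U'U': "adj U' * U' = 1\<^sub>m n" unfolding U'_def nm by (rule ext1_unitary[OF U3 U3U3])
  have AU': "A' * U' = U' * dmat n (\<lambda>i. (e # es) ! i)"
  proof -
    have "A' * U' = U' * dmat (Suc m) (\<lambda>i. if i = 0 then e else es ! (i - 1))"
      unfolding U'_def by (rule ext1_mult[OF _ _ _ A3_def U3 AU3]) (use A' nm c0 r0 in auto)
    also have "dmat (Suc m) (\<lambda>i. if i = 0 then e else es ! (i - 1)) = dmat n (\<lambda>i. (e # es) ! i)"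
      unfolding nm dmat_def by (rule eq_matI) (auto simp: nth_Cons')
    finally show ?thesis .
  qed
  define U where "U = W * U'"
  have U: "U \<in> carrier_mat n n" unfolding U_def using W U' by simp
  have UU: "adj U * U = 1\<^sub>m n"
  proof -
    have "adj U * U = adj U' * adj W * (W * U')" unfolding U_def using adj_mult[OF W U'] by simp
    also have "\<dots> = adj U' * (adj W * (W * U'))" by (rule assoc_mult_mat) (use U' W in auto)
    also have "adj W * (W * U') = (adj W * W) * U'" by (rule assoc_mult_mat[symmetric, OF aW W U'])
    also have "\<dots> = U'" unfolding WW using U' by simp
    finally show ?thesis using U'U' by simp
  qed
  have UU': "U * adj U = 1\<^sub>m n" by (rule mat_mult_left_right_inverse[OF adj_carrier[OF U] U UU])
  have WA': "W * A' = A * W"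
  proof -
    have "W * A' = W * (adj W * (A * W))" unfolding A'_def using assoc_mult_mat[OF aW A W] by simp
    also have "\<dots> = (W * adj W) * (A * W)" by (rule assoc_mult_mat[symmetric, OF W aW AW])
    also have "\<dots> = A * W" unfolding WW' by (rule left_mult_one_mat[OF AW])
    finally show ?thesis .
  qed
  have "A * U = (A * W) * U'" unfolding U_def by (rule assoc_mult_mat[symmetric, OF A W U'])
  also have "\<dots> = W * (A' * U')" unfolding WA'[symmetric] by (rule assoc_mult_mat[OF W A' U'])
  also have "\<dots> = W * (U' * dmat n (\<lambda>i. (e # es) ! i))" unfolding AU' ..
  also have "\<dots> = U * dmat n (\<lambda>i. (e # es) ! i)" unfolding U_def by (rule assoc_mult_mat[symmetric]) (use W U' in auto)
  finally show ?case using U UU UU' by blast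
qed


lemma linfac_nonzero: "(\<Prod>e\<leftarrow>es. [:-e, 1:]) \<noteq> (0 :: complex poly)"
  by (auto simp: prod_list_zero_iff)

lemma linfac_proots: "proots (\<Prod>e\<leftarrow>es. [:-e, 1:]) = mset (es :: complex list)"
proof (induction es)
  case (Cons e es)
  have "proots (\<Prod>e\<leftarrow>e # es. [:-e, 1:]) = proots ([:-e, 1:] * (\<Prod>e\<leftarrow>es. [:-e, 1:]))" by simp
  also have "\<dots> = proots [:-e, 1:] + proots (\<Prod>e\<leftarrow>es. [:-e, 1:])"
    by (rule proots_mult) (auto simp: linfac_nonzero)
  finally show ?case using Cons by simp
qed simp

lemma linfac_mset: assumes "mset es = mset (es' :: complex list)"
  shows "(\<Prod>e\<leftarrow>es. [:-e, 1:]) = (\<Prod>e\<leftarrow>es'. [:-e, 1:])"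
proof -
  have "(\<Prod>e\<leftarrow>es. [:-e, 1:]) = prod_mset (image_mset (\<lambda>e. [:-e, 1:]) (mset es))"
    by (metis mset_map prod_mset_prod_list)
  also have "\<dots> = (\<Prod>e\<leftarrow>es'. [:-e, 1:])" unfolding assms by (metis mset_map prod_mset_prod_list)
  finally show ?thesis .
qed

lemma fsq_dmat: "fsq (dmat n g) = (\<Sum>i<n. (cmod (g i))\<^sup>2)"
  unfolding fsq_def by (auto intro!: sum.cong simp: if_distrib[of cmod] if_distrib[of "\<lambda>x. x\<^sup>2"] sum.delta cong: if_cong)

lemma fsq_unitary_right: assumes V: "V \<in> carrier_mat m m" and VV: "V * adj V = 1\<^sub>m m" and X: "X \<in> carrier_mat p m"
  shows "fsq (X * V) = fsq X"
proof -
  have "fsq (X * V) = fsq (adj (X * V))" by (simp add: fsq_adj)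
  also have "adj (X * V) = adj V * adj X" by (rule adj_mult[OF X V])
  also have "fsq (adj V * adj X) = fsq (adj X)"
    by (rule fsq_unitary_left[of _ m m]) (use V X VV in auto)
  finally show ?thesis by (simp add: fsq_adj)
qed

lemma sum_delta_mult: "i < (m::nat) \<Longrightarrow> (\<Sum>j<m. (if j = i then 1 else 0) * (c j::real)) = c i"
  by (subst sum.cong[OF refl, of _ _ "\<lambda>j. if j = i then c j else 0"]) (auto simp: sum.delta)

lemma colsq_fsq: assumes X: "X \<in> carrier_mat p m" and i: "i < m"
  shows "colsq X i = fsq (X * dmat m (\<lambda>j. if j = i then 1 else 0))"
  unfolding fsq_dmat_right[OF X] using i by (simp add: if_distrib[of cmod] if_distrib[of "\<lambda>x. x\<^sup>2"] sum_delta_mult cong: if_cong)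

lemma rowsq_fsq: assumes X: "X \<in> carrier_mat m p" and i: "i < m"
  shows "rowsq X i = fsq (dmat m (\<lambda>j. if j = i then 1 else 0) * X)"
  unfolding fsq_dmat_left[OF X] using i by (simp add: if_distrib[of cmod] if_distrib[of "\<lambda>x. x\<^sup>2"] sum_delta_mult cong: if_cong)

lemma fsq_delta: "i < m \<Longrightarrow> fsq (dmat m (\<lambda>j. if j = i then 1 else 0)) = 1"
  unfolding fsq_dmat by (simp add: if_distrib[of cmod] if_distrib[of "\<lambda>x. x\<^sup>2"] sum.delta cong: if_cong)

lemma spectral_real: assumes A: "A \<in> carrier_mat n n" and hA: "adj A = A" and U: "U \<in> carrier_mat n n"
  and UU: "adj U * U = 1\<^sub>m n" and AU: "A * U = U * dmat n f" and i: "i < n"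
  shows "cnj (f i) = f i"
proof -
  have aU: "adj U \<in> carrier_mat n n" using U by simp
  have D: "dmat n f = adj U * A * U"
  proof -
    have "adj U * A * U = adj U * (U * dmat n f)" using assoc_mult_mat[OF aU A U] AU by simp
    also have "\<dots> = (adj U * U) * dmat n f" by (rule assoc_mult_mat[symmetric, OF aU U dmat_carrier])
    finally show ?thesis using UU by simp
  qed
  have "adj (dmat n f) = adj U * adj (adj U * A)" unfolding D by (rule adj_mult[OF mult_carrier_mat[OF aU A] U])
  also have "adj (adj U * A) = adj A * U" using adj_mult[OF aU A] by simp
  also have "adj U * (adj A * U) = dmat n f" unfolding hA D using assoc_mult_mat[OF aU A U] by simp
  finally have "adj (dmat n f) = dmat n f" .
  hence "adj (dmat n f) $$ (i,i) = dmat n f $$ (i,i)" by simp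
  thus ?thesis using i by simp
qed


lemma eig_desc_props: assumes H: "H \<in> carrier_mat n n" and hH: "adj H = H"
  shows "length (eig_desc H) = n"
    "char_poly H = (\<Prod>e\<leftarrow>map complex_of_real (eig_desc H). [:-e, 1:])"
    "\<And>i j. i \<le> j \<Longrightarrow> j < n \<Longrightarrow> eig_desc H ! j \<le> eig_desc H ! i"
proof -
  obtain es0 where cp: "char_poly H = (\<Prod>e\<leftarrow>es0. [:-e, 1:])" and len: "length es0 = n"
    using char_poly_factorized[OF H] by blast
  from spectral_hermitian[OF H hH cp] obtain U where U: "U \<in> carrier_mat n n" and UU: "adj U * U = 1\<^sub>m n"
    and HU: "H * U = U * dmat n (\<lambda>i. es0 ! i)" by blast
  have real: "complex_of_real (Re e) = e" if "e \<in> set es0" for e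
  proof -
    from that obtain i where i: "i < n" and e: "e = es0 ! i" using len by (auto simp: in_set_conv_nth)
    have "cnj e = e" unfolding e by (rule spectral_real[OF H hH U UU HU i])
    hence "Im e = 0" by (simp add: complex_eq_iff)
    thus ?thesis by (simp add: complex_eq_iff)
  qed
  define S where "S = sorted_list_of_multiset (image_mset Re (mset es0))"
  have L: "eig_desc H = rev S" unfolding eig_desc_def S_def cp linfac_proots ..
  have "length S = size (mset S)" by simp
  also have "\<dots> = n" unfolding S_def using len by simp
  finally have lS: "length S = n" .
  show "length (eig_desc H) = n" unfolding L using lS by simp
  have "mset (map complex_of_real (eig_desc H)) = image_mset complex_of_real (image_mset Re (mset es0))"
    unfolding L S_def by simp
  also have "\<dots> = mset (map (\<lambda>e. complex_of_real (Re e)) es0)" by (simp add: multiset.map_comp o_def)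
  also have "map (\<lambda>e. complex_of_real (Re e)) es0 = es0" using real by (intro map_idI) auto
  finally show "char_poly H = (\<Prod>e\<leftarrow>map complex_of_real (eig_desc H). [:-e, 1:])"
    unfolding cp by (intro linfac_mset) simp
  fix i j assume ij: "i \<le> j" "j < n"
  have sS: "sorted S" unfolding S_def by simp
  have "eig_desc H ! j = S ! (n - Suc j)" unfolding L using ij lS by (simp add: rev_nth)
  also have "\<dots> \<le> S ! (n - Suc i)" by (rule sorted_nth_mono[OF sS]) (use ij lS in auto)
  also have "\<dots> = eig_desc H ! i" unfolding L using ij lS by (simp add: rev_nth)
  finally show "eig_desc H ! j \<le> eig_desc H ! i" .
qed

lemma adj_mult_carrier[simp]: "A \<in> carrier_mat m n1 \<Longrightarrow> B \<in> carrier_mat m n2 \<Longrightarrow> adj A * B \<in> carrier_mat n1 n2"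
  by (rule mult_carrier_mat[OF adj_carrier])

lemma mult_adj_carrier[simp]: "A \<in> carrier_mat n1 m \<Longrightarrow> B \<in> carrier_mat n2 m \<Longrightarrow> A * adj B \<in> carrier_mat n1 n2"
  by (rule mult_carrier_mat[OF _ adj_carrier])

lemma sin_theta_eq: assumes P: "P \<in> carrier_mat n k" and PP: "adj P * P = 1\<^sub>m k"
  and Ps: "Ps \<in> carrier_mat n k" and PsPs: "adj Ps * Ps = 1\<^sub>m k"
  shows "sin_theta_F P Ps = sqrt (real k - fsq (adj P * Ps))"
proof -
  define Z0 where "Z0 = adj P * Ps"
  have Z0: "Z0 \<in> carrier_mat k k" unfolding Z0_def using P Ps by simp
  have aZ0: "adj Z0 \<in> carrier_mat k k" using Z0 by simp
  define S where "S = adj Z0 * Z0"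
  have S: "S \<in> carrier_mat k k" unfolding S_def using Z0 by simp
  have hS: "adj S = S" unfolding S_def using adj_mult[OF aZ0 Z0] by simp
  obtain es where cp: "char_poly S = (\<Prod>e\<leftarrow>es. [:-e, 1:])" and len: "length es = k"
    using char_poly_factorized[OF S] by blast
  from spectral_hermitian[OF S hS cp] obtain V where V: "V \<in> carrier_mat k k" and VV: "adj V * V = 1\<^sub>m k"
    and VV': "V * adj V = 1\<^sub>m k" and SV: "S * V = V * dmat k (\<lambda>i. es ! i)" by blast
  have aV: "adj V \<in> carrier_mat k k" using V by simp
  define Y where "Y = Z0 * V"
  have Y: "Y \<in> carrier_mat k k" unfolding Y_def using Z0 V by simp
  have D: "adj Y * Y = dmat k (\<lambda>i. es ! i)"
  proof -
    have "adj Y * Y = adj V * adj Z0 * (Z0 * V)" unfolding Y_def using adj_mult[OF Z0 V] by simp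
    also have "\<dots> = adj V * (adj Z0 * (Z0 * V))" by (rule assoc_mult_mat[OF aV aZ0 mult_carrier_mat[OF Z0 V]])
    also have "adj Z0 * (Z0 * V) = S * V" unfolding S_def by (rule assoc_mult_mat[symmetric, OF aZ0 Z0 V])
    also have "adj V * (S * V) = adj V * (V * dmat k (\<lambda>i. es ! i))" by (simp only: SV)
    also have "\<dots> = (adj V * V) * dmat k (\<lambda>i. es ! i)"
      by (rule assoc_mult_mat[symmetric, OF aV V dmat_carrier])
    finally show ?thesis unfolding VV by simp
  qed
  define c where "c i = colsq Y i" for i
  have esc: "es ! i = complex_of_real (c i)" if "i < k" for i
  proof -
    have "es ! i = (adj Y * Y) $$ (i,i)" unfolding D using that by simp
    also have "\<dots> = complex_of_real (c i)" unfolding c_def by (rule adj_mult_self_diag) (use Y that in auto)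
    finally show ?thesis .
  qed
  have c1: "c i \<le> 1" if i: "i < k" for i
  proof -
    let ?E = "dmat k (\<lambda>j. if j = i then 1 else 0)"
    have "c i = fsq (Y * ?E)" unfolding c_def by (rule colsq_fsq[OF Y i])
    also have "Y * ?E = adj P * (Ps * (V * ?E))"
    proof -
      have "Y * ?E = Z0 * (V * ?E)" unfolding Y_def by (rule assoc_mult_mat[OF Z0 V dmat_carrier])
      also have "\<dots> = adj P * (Ps * (V * ?E))" unfolding Z0_def
        by (rule assoc_mult_mat[OF adj_carrier[OF P] Ps]) (use V in auto)
      finally show ?thesis .
    qed
    also have "fsq (adj P * (Ps * (V * ?E))) \<le> fsq (Ps * (V * ?E))"
      by (rule fsq_proj_le(1)[OF P PP]) (use Ps V in auto)
    also have "\<dots> = fsq (V * ?E)" by (rule fsq_unitary_left[OF Ps PsPs]) (use V in auto)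
    also have "\<dots> = fsq ?E" by (rule fsq_unitary_left[OF V VV dmat_carrier])
    also have "\<dots> = 1" by (rule fsq_delta[OF i])
    finally show ?thesis .
  qed
  have c0: "0 \<le> c i" for i unfolding c_def by (rule colsq_nonneg)
  have csum: "(\<Sum>i<k. c i) = fsq Z0"
  proof -
    have "(\<Sum>i<k. c i) = fsq Y" unfolding c_def fsq_cols using Y by simp
    also have "\<dots> = fsq Z0" unfolding Y_def by (rule fsq_unitary_right[OF V VV' Z0])
    finally show ?thesis .
  qed
  have ev: "eig_desc S = rev (sorted_list_of_multiset (image_mset Re (mset es)))"
    unfolding eig_desc_def cp linfac_proots ..
  let ?g = "\<lambda>\<sigma>::real. (sin (arccos \<sigma>))\<^sup>2"
  have "(\<Sum>\<sigma>\<leftarrow>sing_vals (adj P * Ps). ?g \<sigma>) = sum_list (map ?g (map sqrt (eig_desc S)))"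
    unfolding sing_vals_def S_def Z0_def ..
  also have "\<dots> = sum_mset (image_mset (\<lambda>e. ?g (sqrt (Re e))) (mset es))"
    unfolding ev sum_mset_sum_list[symmetric] by (simp add: multiset.map_comp o_def)
  also have "\<dots> = sum_list (map (\<lambda>e. ?g (sqrt (Re e))) es)"
    by (metis mset_map sum_mset_sum_list)
  also have "\<dots> = (\<Sum>i<k. ?g (sqrt (Re (es ! i))))"
    unfolding sum_list_sum_nth using len by (simp add: atLeast0LessThan)
  also have "\<dots> = (\<Sum>i<k. 1 - c i)"
  proof (rule sum.cong[OF refl])
    fix i assume "i \<in> {..<k}"
    hence i: "i < k" by simp
    have r: "Re (es ! i) = c i" using esc[OF i] by simp
    have s0: "0 \<le> sqrt (c i)" and s1: "sqrt (c i) \<le> 1" using c0[of i] c1[OF i] by auto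
    have "?g (sqrt (c i)) = (sqrt (1 - (sqrt (c i))\<^sup>2))\<^sup>2" using sin_arccos[of "sqrt (c i)"] s0 s1 by simp
    also have "\<dots> = 1 - c i" using c0[of i] c1[OF i] by simp
    finally show "?g (sqrt (Re (es ! i))) = 1 - c i" unfolding r .
  qed
  also have "\<dots> = real k - fsq (adj P * Ps)" using csum unfolding Z0_def by (simp add: sum_subtractf)
  finally show ?thesis unfolding sin_theta_F_def by simp
qed


lemma assoc_dim: "dim_col A = dim_row B \<Longrightarrow> dim_col B = dim_row C \<Longrightarrow> A * B * C = A * (B * C)"
  by (rule assoc_mult_mat[of A "dim_row A" "dim_col A" B "dim_col B" C "dim_col C"]) (auto intro!: carrier_matI)

lemma adj_mult_dim: "dim_col A = dim_row B \<Longrightarrow> adj (A * B) = adj B * adj A"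
  by (rule adj_mult[of A "dim_row A" "dim_col A" B "dim_col B"]) (auto intro!: carrier_matI)

lemma dmat_cong: "(\<And>i. i < n \<Longrightarrow> f i = g i) \<Longrightarrow> dmat n f = dmat n g"
  unfolding dmat_def by (rule eq_matI) auto

lemma adj_dmat: "adj (dmat n f) = dmat n (\<lambda>i. cnj (f i))"
  by (rule eq_matI) auto

lemma fsq_orth: assumes P: "P \<in> carrier_mat n k" and PP: "adj P * P = 1\<^sub>m k"
  shows "fsq P = real k"
proof -
  have "fsq P = (\<Sum>j<k. Re ((adj P * P) $$ (j,j)))" unfolding fsq_via_gram using P by simp
  also have "\<dots> = (\<Sum>j<k. 1)" unfolding PP by (intro sum.cong) auto
  finally show ?thesis by simp
qed

lemma unit_left_dim: "adj P * P = 1\<^sub>m k \<Longrightarrow> dim_col P = k \<Longrightarrow> dim_row X = k \<Longrightarrow> adj P * (P * X) = X"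
  by (subst assoc_dim[symmetric]) auto

lemma unit_right_dim: "P * adj P = 1\<^sub>m n \<Longrightarrow> dim_row P = n \<Longrightarrow> dim_row X = n \<Longrightarrow> P * (adj P * X) = X"
  by (subst assoc_dim[symmetric]) auto



lemma key_proj:
  assumes H: "H \<in> carrier_mat n n" and hH: "adj H = H"
    and U: "U \<in> carrier_mat n n" and UU: "adj U * U = 1\<^sub>m n" and UU': "U * adj U = 1\<^sub>m n"
    and HU: "H * U = U * dmat n d"
    and Ps: "Ps \<in> carrier_mat n k" and PsPs: "adj Ps * Ps = 1\<^sub>m k" and kn: "k \<le> n"
    and M: "M \<in> carrier_mat k k" and HPs: "H * Ps = Ps * M"
    and noev: "\<And>i. k \<le> i \<Longrightarrow> i < n \<Longrightarrow> \<not> eigenvalue M (d i)"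
  shows "Ps * adj Ps = U * dmat n (\<lambda>i. if i < k then 1 else 0) * adj U"
    "\<And>i. i < n \<Longrightarrow> rowsq (adj U * Ps) i = (if i < k then 1 else 0)"
proof -
  have aPs: "adj Ps \<in> carrier_mat k n" using Ps by simp
  have aU: "adj U \<in> carrier_mat n n" using U by simp
  have dimsB[simp]: "dim_row (adj Ps * U) = k" "dim_col (adj Ps * U) = n" "dim_row (adj U * Ps) = n" "dim_col (adj U * Ps) = k"
    using U Ps by auto
  have dims[simp]: "dim_row H = n" "dim_col H = n" "dim_row U = n" "dim_col U = n" "dim_row Ps = n" "dim_col Ps = k"
    "dim_row M = k" "dim_col M = k" using H U Ps M by auto
  have Meq: "M = adj Ps * H * Ps"
  proof -
    have "adj Ps * H * Ps = adj Ps * (Ps * M)" by (simp add: assoc_dim HPs)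
    also have "\<dots> = M" by (rule unit_left_dim[OF PsPs]) auto
    finally show ?thesis by simp
  qed
  have hM: "adj M = M" unfolding Meq by (simp add: adj_mult_dim assoc_dim hH)
  have PsH: "adj Ps * H = M * adj Ps"
  proof -
    have "adj (H * Ps) = adj (Ps * M)" by (simp add: HPs)
    thus ?thesis by (simp add: adj_mult_dim hH hM)
  qed
  define B where "B = adj Ps * U"
  have B: "B \<in> carrier_mat k n" unfolding B_def using Ps U by simp
  have MB: "M * B = B * dmat n d"
  proof -
    have "M * B = M * adj Ps * U" unfolding B_def by (simp add: assoc_dim)
    also have "\<dots> = adj Ps * (H * U)" unfolding PsH[symmetric] by (simp add: assoc_dim)
    also have "\<dots> = B * dmat n d" unfolding HU B_def by (simp add: assoc_dim)
    finally show ?thesis .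
  qed
  have B0: "B $$ (j,i) = 0" if j: "j < k" and i: "k \<le> i" "i < n" for i j
  proof -
    define w where "w = col B i"
    have w: "w \<in> carrier_vec k" unfolding w_def using col_dim[of B i] carrier_matD(1)[OF B] by simp
    have "M *\<^sub>v w = col (M * B) i" unfolding w_def using col_mult2[OF M B i(2)] by simp
    also have "\<dots> = col (B * dmat n d) i" unfolding MB ..
    also have "\<dots> = d i \<cdot>\<^sub>v w" unfolding w_def dmat_mult_right[OF B] using i B by (intro eq_vecI) auto
    finally have Mw: "M *\<^sub>v w = d i \<cdot>\<^sub>v w" .
    have "w = 0\<^sub>v k"
    proof (rule ccontr)
      assume "w \<noteq> 0\<^sub>v k"
      hence "eigenvector M w (d i)" unfolding eigenvector_def using w Mw by simp
      hence "eigenvalue M (d i)" unfolding eigenvalue_def by blast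
      with noev[OF i] show False by simp
    qed
    hence "w $ j = 0" using j by simp
    thus ?thesis unfolding w_def using j i B by simp
  qed
  define C where "C = adj U * Ps"
  have C: "C \<in> carrier_mat n k" unfolding C_def using U Ps by simp
  have dimC[simp]: "dim_row C = n" "dim_col C = k" using C by auto
  have CB: "C = adj B" unfolding C_def B_def by (simp add: adj_mult_dim)
  have C0: "C $$ (i,j) = 0" if "j < k" "k \<le> i" "i < n" for i j
    unfolding CB using B0[OF that] that B by simp
  have CC: "adj C * C = 1\<^sub>m k"
  proof -
    have "adj C * C = adj Ps * (U * (adj U * Ps))" unfolding C_def by (simp add: adj_mult_dim assoc_dim)
    also have "U * (adj U * Ps) = Ps" by (rule unit_right_dim[OF UU']) auto
    finally show ?thesis using PsPs by simp
  qed
  define C1 where "C1 = mat k k (\<lambda>(i,j). C $$ (i,j))"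
  have C1: "C1 \<in> carrier_mat k k" unfolding C1_def by simp
  have C1C1: "adj C1 * C1 = 1\<^sub>m k"
  proof (rule eq_matI)
    fix i j assume "i < dim_row (1\<^sub>m k :: complex mat)" "j < dim_col (1\<^sub>m k :: complex mat)"
    hence i: "i < k" and j: "j < k" by auto
    have "(adj C1 * C1) $$ (i,j) = (\<Sum>l\<in>{0..<k}. cnj (C $$ (l,i)) * C $$ (l,j))"
      using i j unfolding C1_def by (simp add: scalar_prod_def)
    also have "\<dots> = (\<Sum>l\<in>{0..<n}. cnj (C $$ (l,i)) * C $$ (l,j))"
      by (rule sum.mono_neutral_left) (use kn C0 j in auto)
    also have "\<dots> = (adj C * C) $$ (i,j)" using i j C by (simp add: scalar_prod_def)
    finally show "(adj C1 * C1) $$ (i,j) = 1\<^sub>m k $$ (i,j)" unfolding CC .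
  qed (use C1 in auto)
  have C1C1': "C1 * adj C1 = 1\<^sub>m k" by (rule mat_mult_left_right_inverse[OF adj_carrier[OF C1] C1 C1C1])
  have K: "C * adj C = dmat n (\<lambda>i. if i < k then 1 else 0)"
  proof (rule eq_matI)
    fix i l assume "i < dim_row (dmat n (\<lambda>i. if i < k then 1 else 0))" "l < dim_col (dmat n (\<lambda>i. if i < k then 1 else (0::complex)))"
    hence i: "i < n" and l: "l < n" by auto
    have e: "(C * adj C) $$ (i,l) = (\<Sum>m\<in>{0..<k}. C $$ (i,m) * cnj (C $$ (l,m)))"
      using i l C by (simp add: scalar_prod_def)
    show "(C * adj C) $$ (i,l) = dmat n (\<lambda>i. if i < k then 1 else 0) $$ (i,l)"
    proof (cases "i < k \<and> l < k")
      case True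
      have "(\<Sum>m\<in>{0..<k}. C $$ (i,m) * cnj (C $$ (l,m))) = (C1 * adj C1) $$ (i,l)"
        using True unfolding C1_def by (simp add: scalar_prod_def)
      thus ?thesis unfolding e C1C1' using True i l by simp
    next
      case False
      have "(\<Sum>m\<in>{0..<k}. C $$ (i,m) * cnj (C $$ (l,m))) = 0"
        using False C0 i l by (intro sum.neutral) auto
      thus ?thesis unfolding e using False i l by auto
    qed
  qed (use C in auto)
  have PsUC: "Ps = U * C" unfolding C_def by (rule unit_right_dim[OF UU', symmetric]) auto
  show "Ps * adj Ps = U * dmat n (\<lambda>i. if i < k then 1 else 0) * adj U"
    unfolding K[symmetric] by (subst (1 2) PsUC) (simp add: adj_mult_dim assoc_dim)
  fix i assume i: "i < n"
  have "complex_of_real (rowsq C i) = (C * adj C) $$ (i,i)"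
    using i C unfolding rowsq_def by (simp add: scalar_prod_def lessThan_atLeast0 complex_norm_square del: of_real_power)
  also have "\<dots> = (if i < k then 1 else 0)" unfolding K using i by simp
  finally show "rowsq (adj U * Ps) i = (if i < k then 1 else 0)" unfolding C_def[symmetric]
    by (cases "i < k") (simp_all add: complex_eq_iff)
qed


lemma sum_split_k: "k \<le> (n::nat) \<Longrightarrow> (\<Sum>i<n. f i) = (\<Sum>i<k. f i) + (\<Sum>i\<in>{k..<n}. (f i :: real))"
  by (simp add: lessThan_atLeast0 sum.atLeastLessThan_concat)

lemma sum_if_k: "k \<le> (n::nat) \<Longrightarrow> (\<Sum>i<n. if i < k then f i else 0) = (\<Sum>i<k. (f i :: 'a :: comm_monoid_add))"
  by (subst sum.inter_restrict[symmetric, of "{..<n}" "{..<k}", simplified]) (auto intro!: sum.cong)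

lemma Y_facts:
  assumes H: "H \<in> carrier_mat n n" and U: "U \<in> carrier_mat n n"
    and UU: "adj U * U = 1\<^sub>m n" and UU': "U * adj U = 1\<^sub>m n"
    and HU: "H * U = U * dmat n (\<lambda>i. complex_of_real (L i))"
    and P: "P \<in> carrier_mat n k" and PP: "adj P * P = 1\<^sub>m k"
    and Ps: "Ps \<in> carrier_mat n k" and PsPs: "adj Ps * Ps = 1\<^sub>m k"
    and J: "Ps * adj Ps = U * dmat n (\<lambda>i. if i < k then 1 else 0) * adj U"
    and rowC: "\<And>i. i < n \<Longrightarrow> rowsq (adj U * Ps) i = (if i < k then 1 else 0)"
    and kn: "0 < k" "k < n"
    and mono: "\<And>i j. i \<le> j \<Longrightarrow> j < n \<Longrightarrow> L j \<le> L i"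

  shows "(\<Sum>i<n. rowsq (adj U * P) i) = real k"
    "(\<Sum>i<k. rowsq (adj U * P) i) = fsq (adj P * Ps)"
    "\<And>i. i < n \<Longrightarrow> rowsq (adj U * P) i \<le> 1"
    "H = U * dmat n (\<lambda>i. complex_of_real (L i)) * adj U"
proof -
  have dims[simp]: "dim_row H = n" "dim_col H = n" "dim_row U = n" "dim_col U = n" "dim_row Ps = n" "dim_col Ps = k"
    "dim_row P = n" "dim_col P = k" using H U Ps P by auto
  let ?Y = "adj U * P"
  have Y: "?Y \<in> carrier_mat n k" using U P by simp
  have aU: "adj U \<in> carrier_mat n n" using U by simp
  have "(\<Sum>i<n. rowsq ?Y i) = fsq ?Y" unfolding fsq_rows by simp
  also have "\<dots> = fsq P" by (rule fsq_unitary_left[OF aU _ P]) (simp add: UU')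
  also have "\<dots> = real k" by (rule fsq_orth[OF P PP])
  finally show "(\<Sum>i<n. rowsq ?Y i) = real k" .
  let ?J = "dmat n (\<lambda>i. if i < k then 1 else (0::complex))"
  have "fsq (?J * ?Y) = (\<Sum>i<n. (cmod (if i < k then 1 else (0::complex)))\<^sup>2 * rowsq ?Y i)"
    by (rule fsq_dmat_left[OF Y])
  also have "\<dots> = (\<Sum>i<n. if i < k then rowsq ?Y i else 0)" by (intro sum.cong) auto
  also have "\<dots> = (\<Sum>i<k. rowsq ?Y i)" by (rule sum_if_k) (use kn in simp)
  finally have e1: "fsq (?J * ?Y) = (\<Sum>i<k. rowsq ?Y i)" .
  have "fsq (?J * ?Y) = fsq (U * (?J * ?Y))" by (rule fsq_unitary_left[OF U UU mult_carrier_mat[OF dmat_carrier Y], symmetric])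
  also have "U * (?J * ?Y) = Ps * (adj Ps * P)"
  proof -
    have "U * (?J * ?Y) = U * ?J * adj U * P" by (simp add: assoc_dim)
    also have "\<dots> = Ps * adj Ps * P" unfolding J ..
    finally show ?thesis by (simp add: assoc_dim)
  qed
  also have "fsq (Ps * (adj Ps * P)) = fsq (adj Ps * P)" by (rule fsq_unitary_left[OF Ps PsPs adj_mult_carrier[OF Ps P]])
  also have "adj Ps * P = adj (adj P * Ps)" by (simp add: adj_mult_dim)
  also have "fsq \<dots> = fsq (adj P * Ps)" by (rule fsq_adj)
  finally show "(\<Sum>i<k. rowsq ?Y i) = fsq (adj P * Ps)" using e1 by simp
  fix i assume i: "i < n"
  let ?E = "dmat n (\<lambda>j. if j = i then 1 else (0::complex))"
  have aE: "adj ?E = ?E" unfolding adj_dmat by (rule dmat_cong) simp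
  have "rowsq ?Y i = fsq (?E * ?Y)" by (rule rowsq_fsq[OF Y i])
  also have "?E * ?Y = adj (adj P * (U * ?E))" by (simp add: adj_mult_dim aE assoc_dim)
  also have "fsq \<dots> = fsq (adj P * (U * ?E))" by (rule fsq_adj)
  also have "\<dots> \<le> fsq (U * ?E)" by (rule fsq_proj_le(1)[OF P PP mult_carrier_mat[OF U dmat_carrier]])
  also have "\<dots> = fsq ?E" by (rule fsq_unitary_left[OF U UU dmat_carrier])
  also have "\<dots> = 1" by (rule fsq_delta[OF i])
  finally show "rowsq ?Y i \<le> 1" .
next
  have dims[simp]: "dim_row H = n" "dim_col H = n" "dim_row U = n" "dim_col U = n" using H U by auto
  have "H = H * (U * adj U)" unfolding UU' using H by simp
  also have "\<dots> = U * dmat n (\<lambda>i. complex_of_real (L i)) * adj U" unfolding assoc_dim[symmetric, of H U "adj U", simplified] HU ..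
  finally show "H = U * dmat n (\<lambda>i. complex_of_real (L i)) * adj U" .
qed


lemma trace_H: assumes H: "H \<in> carrier_mat n n" and U: "U \<in> carrier_mat n n"
  and Hd: "H = U * dmat n (\<lambda>i. complex_of_real (L i)) * adj U" and X: "X \<in> carrier_mat n p"
  shows "mat_trace (adj X * H * X) = (\<Sum>i<n. complex_of_real (L i) * complex_of_real (rowsq (adj U * X) i))"
proof -
  have dims[simp]: "dim_row U = n" "dim_col U = n" "dim_row X = n" "dim_col X = p" using U X by auto
  have "adj X * H * X = adj (adj U * X) * dmat n (\<lambda>i. complex_of_real (L i)) * (adj U * X)"
    unfolding Hd by (simp add: adj_mult_dim assoc_dim)
  also have "mat_trace \<dots> = (\<Sum>i<n. complex_of_real (L i) * complex_of_real (rowsq (adj U * X) i))"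
    by (rule trace_quad[OF adj_mult_carrier[OF U X]])
  finally show ?thesis .
qed

lemma eta_bound:
  assumes H: "H \<in> carrier_mat n n" and U: "U \<in> carrier_mat n n"
    and UU: "adj U * U = 1\<^sub>m n" and UU': "U * adj U = 1\<^sub>m n"
    and HU: "H * U = U * dmat n (\<lambda>i. complex_of_real (L i))"
    and P: "P \<in> carrier_mat n k" and PP: "adj P * P = 1\<^sub>m k"
    and Ps: "Ps \<in> carrier_mat n k" and PsPs: "adj Ps * Ps = 1\<^sub>m k"
    and J: "Ps * adj Ps = U * dmat n (\<lambda>i. if i < k then 1 else 0) * adj U"
    and rowC: "\<And>i. i < n \<Longrightarrow> rowsq (adj U * Ps) i = (if i < k then 1 else 0)"
    and kn: "0 < k" "k < n"
    and mono: "\<And>i j. i \<le> j \<Longrightarrow> j < n \<Longrightarrow> L j \<le> L i"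

  shows "(L (k - 1) - L k) * (real k - fsq (adj P * Ps))
     \<le> Re (mat_trace (adj Ps * H * Ps) - mat_trace (adj P * H * P))"
    "0 \<le> real k - fsq (adj P * Ps)"
proof -
  note YF = Y_facts[OF assms]
  have Hd: "H = U * dmat n (\<lambda>i. complex_of_real (L i)) * adj U" by (rule YF(4)) auto
  define r where "r i = rowsq (adj U * P) i" for i
  define ss where "ss = real k - fsq (adj P * Ps)"
  have r0: "0 \<le> r i" for i unfolding r_def by (rule rowsq_nonneg)
  have r1: "r i \<le> 1" if "i < n" for i unfolding r_def by (rule YF(3)) (use that in auto)
  have rn: "(\<Sum>i<n. r i) = real k" unfolding r_def by (rule YF(1)) auto
  have rk: "(\<Sum>i<k. r i) = fsq (adj P * Ps)" unfolding r_def by (rule YF(2)) auto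
  have rkn: "(\<Sum>i\<in>{k..<n}. r i) = ss"
    using sum_split_k[of k n r] rn rk kn unfolding ss_def by simp
  have ss0: "0 \<le> ss" unfolding rkn[symmetric] by (rule sum_nonneg) (simp add: r0)
  have tPs: "mat_trace (adj Ps * H * Ps) = complex_of_real (\<Sum>i<k. L i)"
  proof -
    have "mat_trace (adj Ps * H * Ps) = (\<Sum>i<n. complex_of_real (L i) * complex_of_real (rowsq (adj U * Ps) i))"
      by (rule trace_H[OF H U Hd Ps])
    also have "\<dots> = (\<Sum>i<n. if i < k then complex_of_real (L i) else 0)"
      by (intro sum.cong refl) (simp add: rowC)
    also have "\<dots> = (\<Sum>i<k. complex_of_real (L i))" by (rule sum_if_k) (use kn in simp)
    finally show ?thesis by simp
  qed
  have tP: "mat_trace (adj P * H * P) = complex_of_real (\<Sum>i<n. L i * r i)"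
    unfolding trace_H[OF H U Hd P] r_def by simp
  have eta: "Re (mat_trace (adj Ps * H * Ps) - mat_trace (adj P * H * P)) = (\<Sum>i<k. L i) - (\<Sum>i<n. L i * r i)"
    unfolding tPs tP by simp
  have A: "L (k - 1) * ss \<le> (\<Sum>i<k. L i * (1 - r i))"
  proof -
    have "L (k - 1) * ss = (\<Sum>i<k. L (k - 1) * (1 - r i))"
      unfolding ss_def rk[symmetric] by (simp add: sum_distrib_left[symmetric] sum_subtractf)
    also have "\<dots> \<le> (\<Sum>i<k. L i * (1 - r i))"
    proof (rule sum_mono)
      fix i assume "i \<in> {..<k}"
      hence i: "i < k" by simp
      have "L (k - 1) \<le> L i" using mono[of i "k - 1"] i kn by simp
      moreover have "0 \<le> 1 - r i" using r1[of i] i kn by simp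
      ultimately show "L (k - 1) * (1 - r i) \<le> L i * (1 - r i)" by (rule mult_right_mono)
    qed
    finally show ?thesis .
  qed
  have B: "(\<Sum>i\<in>{k..<n}. L i * r i) \<le> L k * ss"
  proof -
    have "(\<Sum>i\<in>{k..<n}. L i * r i) \<le> (\<Sum>i\<in>{k..<n}. L k * r i)"
    proof (rule sum_mono)
      fix i assume "i \<in> {k..<n}"
      hence "L i \<le> L k" using mono[of k i] by simp
      thus "L i * r i \<le> L k * r i" using r0[of i] by (rule mult_right_mono)
    qed
    also have "\<dots> = L k * ss" unfolding rkn[symmetric] by (simp add: sum_distrib_left)
    finally show ?thesis .
  qed
  have "(\<Sum>i<n. L i * r i) = (\<Sum>i<k. L i * r i) + (\<Sum>i\<in>{k..<n}. L i * r i)"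
    by (rule sum_split_k) (use kn in simp)
  moreover have "(\<Sum>i<k. L i * (1 - r i)) = (\<Sum>i<k. L i) - (\<Sum>i<k. L i * r i)"
    by (simp add: right_diff_distrib sum_subtractf)
  ultimately have "(L (k - 1) - L k) * ss \<le> (\<Sum>i<k. L i) - (\<Sum>i<n. L i * r i)"
    using A B by (simp add: left_diff_distrib)
  thus "(L (k - 1) - L k) * (real k - fsq (adj P * Ps)) \<le> Re (mat_trace (adj Ps * H * Ps) - mat_trace (adj P * H * P))"
    unfolding eta ss_def .
  show "0 \<le> real k - fsq (adj P * Ps)" using ss0 unfolding ss_def .
qed


lemma R_bound:
  assumes H: "H \<in> carrier_mat n n" and U: "U \<in> carrier_mat n n"
    and UU: "adj U * U = 1\<^sub>m n" and UU': "U * adj U = 1\<^sub>m n"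
    and HU: "H * U = U * dmat n (\<lambda>i. complex_of_real (L i))"
    and P: "P \<in> carrier_mat n k" and PP: "adj P * P = 1\<^sub>m k"
    and Ps: "Ps \<in> carrier_mat n k" and PsPs: "adj Ps * Ps = 1\<^sub>m k"
    and J: "Ps * adj Ps = U * dmat n (\<lambda>i. if i < k then 1 else 0) * adj U"
    and rowC: "\<And>i. i < n \<Longrightarrow> rowsq (adj U * Ps) i = (if i < k then 1 else 0)"
    and kn: "0 < k" "k < n"
    and mono: "\<And>i j. i \<le> j \<Longrightarrow> j < n \<Longrightarrow> L j \<le> L i"

  shows "frob_norm (H * P - P * (adj P * H * P)) \<le> (L 0 - L (n - 1)) * sqrt (real k - fsq (adj P * Ps))"
proof -
  note YF = Y_facts[OF assms]
  have Hd: "H = U * dmat n (\<lambda>i. complex_of_real (L i)) * adj U" by (rule YF(4)) auto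
  define r where "r i = rowsq (adj U * P) i" for i
  define ss where "ss = real k - fsq (adj P * Ps)"
  have r0: "0 \<le> r i" for i unfolding r_def by (rule rowsq_nonneg)
  have rn: "(\<Sum>i<n. r i) = real k" unfolding r_def by (rule YF(1)) auto
  have rk: "(\<Sum>i<k. r i) = fsq (adj P * Ps)" unfolding r_def by (rule YF(2)) auto
  have rkn: "(\<Sum>i\<in>{k..<n}. r i) = ss"
    using sum_split_k[of k n r] rn rk kn unfolding ss_def by simp
  have ss0: "0 \<le> ss" unfolding rkn[symmetric] by (rule sum_nonneg) (simp add: r0)
  have dims[simp]: "dim_row H = n" "dim_col H = n" "dim_row U = n" "dim_col U = n" "dim_row Ps = n" "dim_col Ps = k"
    "dim_row P = n" "dim_col P = k" using H U Ps P by auto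
  define c where "c = L (k - 1)"
  define \<alpha> where "\<alpha> = L 0 - c"
  define \<beta> where "\<beta> = c - L (n - 1)"
  have \<alpha>0: "0 \<le> \<alpha>" unfolding \<alpha>_def c_def using mono[of 0 "k - 1"] kn by simp
  have \<beta>0: "0 \<le> \<beta>" unfolding \<beta>_def c_def using mono[of "k - 1" "n - 1"] kn by simp
  define D where "D = dmat n (\<lambda>i. complex_of_real (L i))"
  define E1 where "E1 = dmat n (\<lambda>i. if i < k then complex_of_real (L i - c) else 0)"
  define E2 where "E2 = dmat n (\<lambda>i. if i < k then 0 else complex_of_real (L i - c))"
  define Y where "Y = adj U * P"
  define G where "G = 1\<^sub>m n - P * adj P"
  have Y: "Y \<in> carrier_mat n k" unfolding Y_def using U P by simp
  have G: "G \<in> carrier_mat n n" unfolding G_def by (rule minus_carrier_mat) (use P in simp)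
  have dims2[simp]: "dim_row Y = n" "dim_col Y = k" "dim_row G = n" "dim_col G = n"
    "dim_row E1 = n" "dim_col E1 = n" "dim_row E2 = n" "dim_col E2 = n" "dim_row D = n" "dim_col D = n"
    using Y G unfolding E1_def E2_def D_def by auto
  have aG: "adj G = G" unfolding G_def using adj_minus[of "1\<^sub>m n" n n "P * adj P"] P by (simp add: adj_mult_dim)
  have GP: "G * P = 0\<^sub>m n k"
  proof -
    have "G * P = 1\<^sub>m n * P - P * adj P * P" unfolding G_def by (rule minus_mult_distrib_mat[OF one_carrier_mat mult_adj_carrier[OF P P] P])
    also have "P * adj P * P = P" using PP P by (simp add: assoc_dim)
    finally show ?thesis using P by (auto intro!: eq_matI)
  qed
  have UY: "U * Y = P" unfolding Y_def by (rule unit_right_dim[OF UU']) auto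
  have DY: "D * Y = E1 * Y + E2 * Y + complex_of_real c \<cdot>\<^sub>m Y"
    unfolding D_def E1_def E2_def dmat_mult_left[OF Y] by (rule eq_matI) (auto simp: algebra_simps)
  have R0: "H * P - P * (adj P * H * P) = G * (H * P)"
  proof -
    have "G * (H * P) = 1\<^sub>m n * (H * P) - P * adj P * (H * P)" unfolding G_def
      by (rule minus_mult_distrib_mat[OF one_carrier_mat mult_adj_carrier[OF P P] mult_carrier_mat[OF H P]])
    thus ?thesis using H P by (simp add: assoc_dim)
  qed
  define T1 where "T1 = G * (U * (E1 * Y))"
  define T2 where "T2 = G * (U * (E2 * Y))"
  have E1c: "E1 \<in> carrier_mat n n" and E2c: "E2 \<in> carrier_mat n n" unfolding E1_def E2_def by (rule dmat_carrier)+
  have T1: "T1 \<in> carrier_mat n k" unfolding T1_def by (rule mult_carrier_mat[OF G mult_carrier_mat[OF U mult_carrier_mat[OF E1c Y]]])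
  have T2: "T2 \<in> carrier_mat n k" unfolding T2_def by (rule mult_carrier_mat[OF G mult_carrier_mat[OF U mult_carrier_mat[OF E2c Y]]])
  have RT: "H * P - P * (adj P * H * P) = T1 + T2"
  proof -
    have HP: "H * P = U * (D * Y)" unfolding Hd D_def Y_def by (simp add: assoc_dim)
    have UDY: "U * (D * Y) = U * (E1 * Y) + U * (E2 * Y) + complex_of_real c \<cdot>\<^sub>m P"
    proof -
      have "U * (D * Y) = U * (E1 * Y + E2 * Y) + U * (complex_of_real c \<cdot>\<^sub>m Y)" unfolding DY
        by (rule mult_add_distrib_mat[OF U add_carrier_mat[OF mult_carrier_mat[OF E2c Y]] smult_carrier_mat[OF Y]])
      also have "U * (E1 * Y + E2 * Y) = U * (E1 * Y) + U * (E2 * Y)"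
        by (rule mult_add_distrib_mat[OF U mult_carrier_mat[OF E1c Y] mult_carrier_mat[OF E2c Y]])
      also have "U * (complex_of_real c \<cdot>\<^sub>m Y) = complex_of_real c \<cdot>\<^sub>m (U * Y)"
        by (rule mult_smult_distrib[OF U Y])
      finally show ?thesis unfolding UY .
    qed
    have "G * (H * P) = G * (U * (E1 * Y) + U * (E2 * Y)) + G * (complex_of_real c \<cdot>\<^sub>m P)"
      unfolding HP UDY by (rule mult_add_distrib_mat[OF G add_carrier_mat[OF mult_carrier_mat[OF U mult_carrier_mat[OF E2c Y]]] smult_carrier_mat[OF P]])
    also have "G * (U * (E1 * Y) + U * (E2 * Y)) = T1 + T2" unfolding T1_def T2_def
      by (rule mult_add_distrib_mat[OF G mult_carrier_mat[OF U mult_carrier_mat[OF E1c Y]] mult_carrier_mat[OF U mult_carrier_mat[OF E2c Y]]])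
    also have "G * (complex_of_real c \<cdot>\<^sub>m P) = 0\<^sub>m n k" using mult_smult_distrib[OF G P] GP by auto
    finally show ?thesis unfolding R0 using T1 T2 by (auto intro!: eq_matI)
  qed
  have fT2: "fsq T2 \<le> \<beta>\<^sup>2 * ss"
  proof -
    have "fsq T2 \<le> fsq (U * (E2 * Y))" unfolding T2_def G_def by (rule fsq_proj_le(2)[OF P PP mult_carrier_mat[OF U mult_carrier_mat[OF E2c Y]]])
    also have "\<dots> = fsq (E2 * Y)" by (rule fsq_unitary_left[OF U UU mult_carrier_mat[OF E2c Y]])
    also have "\<dots> = (\<Sum>i<n. (cmod (if i < k then 0 else complex_of_real (L i - c)))\<^sup>2 * r i)"
      unfolding E2_def r_def Y_def by (rule fsq_dmat_left[OF adj_mult_carrier[OF U P]])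
    also have "\<dots> = (\<Sum>i\<in>{k..<n}. (cmod (if i < k then 0 else complex_of_real (L i - c)))\<^sup>2 * r i)"
      by (subst sum_split_k[of k n]) (use kn in auto)
    also have "\<dots> \<le> (\<Sum>i\<in>{k..<n}. \<beta>\<^sup>2 * r i)"
    proof (rule sum_mono)
      fix i assume "i \<in> {k..<n}"
      hence i: "k \<le> i" "i < n" by auto
      have "L i \<le> c" unfolding c_def using mono[of "k - 1" i] i kn by simp
      moreover have "L (n - 1) \<le> L i" using mono[of i "n - 1"] i by simp
      ultimately have "\<bar>L i - c\<bar> \<le> \<beta>" unfolding \<beta>_def by simp
      hence le: "\<bar>L i - c\<bar>\<^sup>2 \<le> \<beta>\<^sup>2" by (rule power_mono) simp
      have ci: "(if i < k then 0 else complex_of_real (L i - c)) = complex_of_real (L i - c)" using i by simp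
      show "(cmod (if i < k then 0 else complex_of_real (L i - c)))\<^sup>2 * r i \<le> \<beta>\<^sup>2 * r i"
        unfolding ci norm_of_real by (rule mult_right_mono[OF le r0])
    qed
    also have "\<dots> = \<beta>\<^sup>2 * ss" unfolding rkn[symmetric] by (simp add: sum_distrib_left)
    finally show ?thesis .
  qed
  have fT1: "fsq T1 \<le> \<alpha>\<^sup>2 * ss"
  proof -
    define Z where "Z = adj U * G"
    have Z: "Z \<in> carrier_mat n n" unfolding Z_def using U G by simp
    have aE1: "adj E1 = E1" unfolding E1_def adj_dmat by (rule dmat_cong) simp
    have "fsq T1 = fsq (adj T1)" by (simp add: fsq_adj)
    also have "adj T1 = adj P * (U * (E1 * Z))" unfolding T1_def Z_def Y_def
      by (simp add: adj_mult_dim assoc_dim aG aE1)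
    also have "fsq \<dots> \<le> fsq (U * (E1 * Z))" by (rule fsq_proj_le(1)[OF P PP mult_carrier_mat[OF U mult_carrier_mat[OF E1c Z]]])
    also have "\<dots> = fsq (E1 * Z)" by (rule fsq_unitary_left[OF U UU mult_carrier_mat[OF E1c Z]])
    also have "\<dots> = (\<Sum>i<n. (cmod (if i < k then complex_of_real (L i - c) else 0))\<^sup>2 * rowsq Z i)"
      unfolding E1_def by (rule fsq_dmat_left[OF Z])
    also have "\<dots> \<le> (\<Sum>i<n. if i < k then \<alpha>\<^sup>2 * rowsq Z i else 0)"
    proof (rule sum_mono)
      fix i assume "i \<in> {..<n}"
      show "(cmod (if i < k then complex_of_real (L i - c) else 0))\<^sup>2 * rowsq Z i \<le> (if i < k then \<alpha>\<^sup>2 * rowsq Z i else 0)"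
      proof (cases "i < k")
        case True
        have "c \<le> L i" unfolding c_def using mono[of i "k - 1"] True kn by simp
        moreover have "L i \<le> L 0" using mono[of 0 i] True kn by simp
        ultimately have "\<bar>L i - c\<bar> \<le> \<alpha>" unfolding \<alpha>_def by simp
        hence le: "\<bar>L i - c\<bar>\<^sup>2 \<le> \<alpha>\<^sup>2" by (rule power_mono) simp
        have ci: "(if i < k then complex_of_real (L i - c) else 0) = complex_of_real (L i - c)" using True by simp
        show ?thesis unfolding ci norm_of_real using True by (simp only: if_True) (rule mult_right_mono[OF le rowsq_nonneg])
      qed simp
    qed
    also have "\<dots> = (\<Sum>i<k. \<alpha>\<^sup>2 * rowsq Z i)" by (rule sum_if_k) (use kn in simp)
    also have "(\<Sum>i<k. rowsq Z i) = ss"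
    proof -
      let ?J = "dmat n (\<lambda>i. if i < k then 1 else (0::complex))"
      have "fsq (?J * Z) = (\<Sum>i<n. (cmod (if i < k then 1 else (0::complex)))\<^sup>2 * rowsq Z i)"
        by (rule fsq_dmat_left[OF Z])
      also have "\<dots> = (\<Sum>i<n. if i < k then rowsq Z i else 0)" by (intro sum.cong) auto
      also have "\<dots> = (\<Sum>i<k. rowsq Z i)" by (rule sum_if_k) (use kn in simp)
      finally have e1: "fsq (?J * Z) = (\<Sum>i<k. rowsq Z i)" .
      have "fsq (?J * Z) = fsq (U * (?J * Z))" by (rule fsq_unitary_left[OF U UU mult_carrier_mat[OF dmat_carrier Z], symmetric])
      also have "U * (?J * Z) = Ps * (adj Ps * G)"
      proof -
        have "U * (?J * Z) = U * ?J * adj U * G" unfolding Z_def by (simp add: assoc_dim)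
        also have "\<dots> = Ps * adj Ps * G" unfolding J ..
        finally show ?thesis by (simp add: assoc_dim)
      qed
      also have "fsq (Ps * (adj Ps * G)) = fsq (adj Ps * G)" by (rule fsq_unitary_left[OF Ps PsPs adj_mult_carrier[OF Ps G]])
      also have "adj Ps * G = adj (G * Ps)" by (simp add: adj_mult_dim aG)
      also have "fsq \<dots> = fsq (G * Ps)" by (rule fsq_adj)
      also have "\<dots> = fsq Ps - fsq (adj P * Ps)" using fsq_proj[OF P PP Ps] unfolding G_def by simp
      also have "\<dots> = ss" unfolding ss_def fsq_orth[OF Ps PsPs] ..
      finally show ?thesis using e1 by simp
    qed
    hence "(\<Sum>i<k. \<alpha>\<^sup>2 * rowsq Z i) = \<alpha>\<^sup>2 * ss" by (simp add: sum_distrib_left[symmetric])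
    finally show ?thesis .
  qed
  have "frob_norm (H * P - P * (adj P * H * P)) \<le> frob_norm T1 + frob_norm T2"
    unfolding RT by (rule frob_triangle[OF T1 T2])
  also have "frob_norm T1 \<le> \<alpha> * sqrt ss"
  proof -
    have "frob_norm T1 \<le> sqrt (\<alpha>\<^sup>2 * ss)" unfolding frob_fsq using fT1 by (rule real_sqrt_le_mono)
    also have "\<dots> = \<alpha> * sqrt ss" using \<alpha>0 by (simp add: real_sqrt_mult)
    finally show ?thesis .
  qed
  also have "frob_norm T2 \<le> \<beta> * sqrt ss"
  proof -
    have "frob_norm T2 \<le> sqrt (\<beta>\<^sup>2 * ss)" unfolding frob_fsq using fT2 by (rule real_sqrt_le_mono)
    also have "\<dots> = \<beta> * sqrt ss" using \<beta>0 by (simp add: real_sqrt_mult)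
    finally show ?thesis .
  qed
  also have "\<alpha> * sqrt ss + \<beta> * sqrt ss = (L 0 - L (n - 1)) * sqrt ss" unfolding \<alpha>_def \<beta>_def by (simp add: algebra_simps)
  finally show ?thesis unfolding ss_def by simp
qed



theorem theorem3p1:
  fixes H Ps P :: "complex mat" and n k :: nat
  assumes H: "H \<in> carrier_mat n n" and herm: "mat_adjoint H = H"
    and k: "1 \<le> k" "k < n"
    and gap: "eig_desc H ! (k - 1) - eig_desc H ! k > 0"
    and Ps: "Ps \<in> carrier_mat n k" "mat_adjoint Ps * Ps = 1\<^sub>m k"
    and inv: "\<exists>M \<in> carrier_mat k k. H * Ps = Ps * M \<and>
                 proots (char_poly M) = mset (map complex_of_real (take k (eig_desc H)))"
    and P: "P \<in> carrier_mat n k" "mat_adjoint P * P = 1\<^sub>m k"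
  shows "let \<eta> = Re (mat_trace (mat_adjoint Ps * H * Ps) - mat_trace (mat_adjoint P * H * P));
             \<epsilon> = sqrt (\<eta> / (eig_desc H ! (k - 1) - eig_desc H ! k))
         in frob_norm (H * P - P * (mat_adjoint P * H * P)) / (eig_desc H ! 0 - eig_desc H ! (n - 1))
              \<le> sin_theta_F P Ps
            \<and> sin_theta_F P Ps \<le> \<epsilon>"
proof -
  define L where "L = eig_desc H"
  have lenL: "length L = n" unfolding L_def by (rule eig_desc_props(1)[OF H herm])
  have cpH: "char_poly H = (\<Prod>e\<leftarrow>map complex_of_real L. [:-e, 1:])" unfolding L_def by (rule eig_desc_props(2)[OF H herm])
  have monoL: "L ! j \<le> L ! i" if "i \<le> j" "j < n" for i j unfolding L_def by (rule eig_desc_props(3)[OF H herm that])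
  have gapL: "L ! (k - 1) - L ! k > 0" using gap unfolding L_def .
  from spectral_hermitian[OF H herm cpH] obtain U where U: "U \<in> carrier_mat n n" and UU: "adj U * U = 1\<^sub>m n"
    and UU': "U * adj U = 1\<^sub>m n" and HU0: "H * U = U * dmat n (\<lambda>i. map complex_of_real L ! i)" by blast
  have "dmat n (\<lambda>i. map complex_of_real L ! i) = dmat n (\<lambda>i. complex_of_real (L ! i))"
    by (rule dmat_cong) (simp add: lenL)
  with HU0 have HU: "H * U = U * dmat n (\<lambda>i. complex_of_real (L ! i))" by simp
  from inv obtain M where M: "M \<in> carrier_mat k k" and HPs: "H * Ps = Ps * M"
    and pM: "proots (char_poly M) = mset (map complex_of_real (take k L))" unfolding L_def by blast
  have noev: "\<not> eigenvalue M (complex_of_real (L ! i))" if i: "k \<le> i" "i < n" for i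
  proof
    assume "eigenvalue M (complex_of_real (L ! i))"
    hence pz: "poly (char_poly M) (complex_of_real (L ! i)) = 0" using eigenvalue_root_char_poly[OF M] by simp
    have nz: "char_poly M \<noteq> 0" using degree_monic_char_poly[OF M] by auto
    have "order (complex_of_real (L ! i)) (char_poly M) \<noteq> 0" using pz nz order_root by blast
    hence "count (proots (char_poly M)) (complex_of_real (L ! i)) \<noteq> 0" using nz by simp
    hence "complex_of_real (L ! i) \<in># proots (char_poly M)" by (simp add: count_eq_zero_iff)
    hence "complex_of_real (L ! i) \<in> set (map complex_of_real (take k L))" unfolding pM by simp
    then obtain j where j: "j < k" and eq: "complex_of_real (L ! i) = complex_of_real (L ! j)"
      using k lenL by (auto simp: in_set_conv_nth)
    have "L ! i = L ! j" using eq by simp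
    moreover have "L ! (k - 1) \<le> L ! j" using monoL[of j "k - 1"] j k by simp
    moreover have "L ! i \<le> L ! k" using monoL[of k i] i by simp
    ultimately show False using gapL by simp
  qed
  have kn: "0 < k" "k < n" using k by auto
  have KP: "Ps * adj Ps = U * dmat n (\<lambda>i. if i < k then 1 else 0) * adj U"
    "\<And>i. i < n \<Longrightarrow> rowsq (adj U * Ps) i = (if i < k then 1 else 0)"
    by (rule key_proj[OF H herm U UU UU' HU Ps(1) Ps(2) _ M HPs noev]; use k in auto)+
  have EB: "(L ! (k - 1) - L ! k) * (real k - fsq (adj P * Ps))
     \<le> Re (mat_trace (adj Ps * H * Ps) - mat_trace (adj P * H * P))"
    "0 \<le> real k - fsq (adj P * Ps)"
    by (rule eta_bound[of H n U "\<lambda>i. L ! i" P k Ps]; use H U UU UU' HU P Ps KP kn monoL in auto)+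
  have RB: "frob_norm (H * P - P * (adj P * H * P)) \<le> (L ! 0 - L ! (n - 1)) * sqrt (real k - fsq (adj P * Ps))"
    by (rule R_bound[of H n U "\<lambda>i. L ! i" P k Ps]; use H U UU UU' HU P Ps KP kn monoL in auto)
  have ST: "sin_theta_F P Ps = sqrt (real k - fsq (adj P * Ps))" by (rule sin_theta_eq[OF P Ps])
  define ss where "ss = real k - fsq (adj P * Ps)"
  define \<eta> where "\<eta> = Re (mat_trace (adj Ps * H * Ps) - mat_trace (adj P * H * P))"
  have m1: "L ! (k - 1) \<le> L ! 0" using monoL[of 0 "k - 1"] k by simp
  have m2: "L ! (n - 1) \<le> L ! k" using monoL[of k "n - 1"] k by simp
  have d0: "L ! 0 - L ! (n - 1) > 0" using m1 m2 gapL by linarith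
  have part1: "frob_norm (H * P - P * (adj P * H * P)) / (L ! 0 - L ! (n - 1)) \<le> sqrt ss"
    using RB d0 unfolding ss_def by (simp add: pos_divide_le_eq mult.commute)
  have "ss \<le> \<eta> / (L ! (k - 1) - L ! k)"
    using EB(1) gapL unfolding ss_def \<eta>_def by (simp add: pos_le_divide_eq mult.commute)
  hence part2: "sqrt ss \<le> sqrt (\<eta> / (L ! (k - 1) - L ! k))" by (rule real_sqrt_le_mono)
  show ?thesis unfolding Let_def L_def[symmetric] ST ss_def[symmetric] \<eta>_def[symmetric]
    using part1 part2 by simp
qed

end
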